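(* Let $G=(V,w,m)$ be a finite connected weighted graph satisfying $CD(K,\infty)$ for some $K>0$, let $D:=\operatorname{Deg}_{\max}$, and let $0=\lambda_0<\lambda_1\le\lambda_2\le\dots$ be the eigenvalues of $-\Delta$ counted with multiplicity. Suppose $\lambda_{\deg_{\max}}=K$. Then: (1) $G$ has the hypercube shell structure $HSS\left(\frac{2D}K,\frac K2,x_0\right)$ for every $x_0\in V$; (2) $G$ has constant edge degree, i.e. there is $\kappa_0>0$ with $w(x,y)/m(x)\in\{0,\kappa_0\}$ for all $x,y\in V$.
   Context: A weighted graph is $G=(V,w,m)$ with $V$ countable, $w:V\times V\to[0,\infty)$ symmetric with $w(x,x)=0$, $m:V\to(0,\infty)$; $x\sim y$ iff $w(x,y)>0$. Laplacian $\Delta f(x)=\frac1{m(x)}\sum_y w(x,y)(f(y)-f(x))$ (self-adjoint on $\ell^2(V,m)$). $\operatorname{Deg}(x)=\frac1{m(x)}\sum_yw(x,y)$, $\operatorname{Deg}_{\max}=\max_x\operatorname{Deg}(x)$, $\deg(x)=\#\{y:y\sim x\}$, $\deg_{\max}=\max_x\deg(x)$. $d$ is the combinatorial graph distance. $2\Gamma(f,g)=\Delta(fg)-f\Delta g-g\Delta f$, $2\Gamma_2(f,g)=\Delta\Gamma(f,g)-\Gamma(f,\Delta g)-\Gamma(g,\Delta f)$, $\Gamma f=\Gamma(f,f)$, $\Gamma_2f=\Gamma_2(f,f)$; $CD(K,\infty)$ means $\Gamma_2f(x)\ge K\Gamma f(x)$ for all $f$ and $x$. $d_-^{x_0}(z)=\sum_{y\sim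 z,\ d(y,x_0)<d(z,x_0)}\frac{w(y,z)}{m(z)}$. Hypercube shell structure $HSS(N,W,x_0)$ ($N,W>0$): (i) $\operatorname{Deg}(x)=NW$ for all $x\in V$; (ii) $G$ is bipartite; (iii) $d_-^{x_0}(x)=W\,d(x,x_0)$ for all $x\in V$. *)

theory Defs
  imports "HOL-Analysis.Analysis" "HOL-Computational_Algebra.Polynomial"
begin

definition weighted_graph :: "('v::finite \<Rightarrow> 'v \<Rightarrow> real) \<Rightarrow> ('v \<Rightarrow> real) \<Rightarrow> bool" where
  "weighted_graph w m \<longleftrightarrow> (\<forall>x y. w x y = w y x) \<and> (\<forall>x y. w x y \<ge> 0) \<and>
      (\<forall>x. w x x = 0) \<and> (\<forall>x. m x > 0)"

definition adj :: "('v \<Rightarrow> 'v \<Rightarrow> real) \<Rightarrow> 'v \<Rightarrow> 'v \<Rightarrow> bool" where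
  "adj w x y \<longleftrightarrow> w x y > 0"

definition gdist :: "('v \<Rightarrow> 'v \<Rightarrow> real) \<Rightarrow> 'v \<Rightarrow> 'v \<Rightarrow> nat" where
  "gdist w x y = (LEAST n. (adj w ^^ n) x y)"

definition connected_graph :: "('v \<Rightarrow> 'v \<Rightarrow> real) \<Rightarrow> bool" where
  "connected_graph w \<longleftrightarrow> (\<forall>x y. \<exists>n. (adj w ^^ n) x y)"

definition bipartite_graph :: "('v \<Rightarrow> 'v \<Rightarrow> real) \<Rightarrow> bool" where
  "bipartite_graph w \<longleftrightarrow> (\<exists>c :: 'v \<Rightarrow> bool. \<forall>x y. adj w x y \<longrightarrow> c x \<noteq> c y)"

definition Lap :: "('v::finite \<Rightarrow> 'v \<Rightarrow> real) \<Rightarrow> ('v \<Rightarrow> real) \<Rightarrow> ('v \<Rightarrow> real) \<Rightarrow> 'v \<Rightarrow> real" where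
  "Lap w m f x = (1 / m x) * (\<Sum>y\<in>UNIV. w x y * (f y - f x))"

definition Gam :: "('v::finite \<Rightarrow> 'v \<Rightarrow> real) \<Rightarrow> ('v \<Rightarrow> real) \<Rightarrow> ('v \<Rightarrow> real) \<Rightarrow> ('v \<Rightarrow> real) \<Rightarrow> 'v \<Rightarrow> real" where
  "Gam w m f g x = (Lap w m (\<lambda>z. f z * g z) x - f x * Lap w m g x - g x * Lap w m f x) / 2"

definition Gam2 :: "('v::finite \<Rightarrow> 'v \<Rightarrow> real) \<Rightarrow> ('v \<Rightarrow> real) \<Rightarrow> ('v \<Rightarrow> real) \<Rightarrow> ('v \<Rightarrow> real) \<Rightarrow> 'v \<Rightarrow> real" where
  "Gam2 w m f g x = (Lap w m (Gam w m f g) x - Gam w m f (Lap w m g) x - Gam w m g (Lap w m f) x) / 2"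

definition CD_inf :: "('v::finite \<Rightarrow> 'v \<Rightarrow> real) \<Rightarrow> ('v \<Rightarrow> real) \<Rightarrow> real \<Rightarrow> bool" where
  "CD_inf w m K \<longleftrightarrow> (\<forall>f x. Gam2 w m f f x \<ge> K * Gam w m f f x)"

definition Deg :: "('v::finite \<Rightarrow> 'v \<Rightarrow> real) \<Rightarrow> ('v \<Rightarrow> real) \<Rightarrow> 'v \<Rightarrow> real" where
  "Deg w m x = (1 / m x) * (\<Sum>y\<in>UNIV. w x y)"

definition Deg_max :: "('v::finite \<Rightarrow> 'v \<Rightarrow> real) \<Rightarrow> ('v \<Rightarrow> real) \<Rightarrow> real" where
  "Deg_max w m = Max (range (Deg w m))"

definition deg :: "('v::finite \<Rightarrow> 'v \<Rightarrow> real) \<Rightarrow> 'v \<Rightarrow> nat" where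
  "deg w x = card {y. adj w y x}"

definition deg_max :: "('v::finite \<Rightarrow> 'v \<Rightarrow> real) \<Rightarrow> nat" where
  "deg_max w = Max (range (deg w))"

definition d_minus :: "('v::finite \<Rightarrow> 'v \<Rightarrow> real) \<Rightarrow> ('v \<Rightarrow> real) \<Rightarrow> 'v \<Rightarrow> 'v \<Rightarrow> real" where
  "d_minus w m x0 z = (\<Sum>y\<in>{y. adj w y z \<and> gdist w y x0 < gdist w z x0}. w y z / m z)"

definition HSS :: "('v::finite \<Rightarrow> 'v \<Rightarrow> real) \<Rightarrow> ('v \<Rightarrow> real) \<Rightarrow> real \<Rightarrow> real \<Rightarrow> 'v \<Rightarrow> bool" where
  "HSS w m N W x0 \<longleftrightarrow> N > 0 \<and> W > 0 \<and> (\<forall>x. Deg w m x = N * W) \<and> bipartite_graph w \<and>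
      (\<forall>x. d_minus w m x0 x = W * real (gdist w x x0))"

definition negLap_matrix :: "('v::finite \<Rightarrow> 'v \<Rightarrow> real) \<Rightarrow> ('v \<Rightarrow> real) \<Rightarrow> real^'v^'v" where
  "negLap_matrix w m = (\<chi> x y. - Lap w m (\<lambda>z. if z = y then 1 else 0) x)"

definition char_poly_mat :: "real^'n^'n \<Rightarrow> real poly" where
  "char_poly_mat A = det (\<chi> i j. (if i = j then [:0, 1:] else 0) - [:A $ i $ j:])"

text \<open>Eigenvalues of -Lap counted with (algebraic = geometric, as -Lap is self-adjoint
  on l^2(V,m)) multiplicity, in nondecreasing order.\<close>
definition eigenvalues :: "('v::finite \<Rightarrow> 'v \<Rightarrow> real) \<Rightarrow> ('v \<Rightarrow> real) \<Rightarrow> real list" where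
  "eigenvalues w m = (THE ls. sorted ls \<and>
      char_poly_mat (negLap_matrix w m) = prod_list (map (\<lambda>l. [:- l, 1:]) ls))"

end

theory Submission
  imports Defs
begin


locale wgraph =
  fixes w :: "'v::finite \<Rightarrow> 'v \<Rightarrow> real" and m :: "'v \<Rightarrow> real"
  assumes wg: "weighted_graph w m"
begin

lemma wsym: "w x y = w y x" using wg unfolding weighted_graph_def by auto
lemma wnn: "0 \<le> w x y" using wg unfolding weighted_graph_def by auto
lemma wdiag[simp]: "w x x = 0" using wg unfolding weighted_graph_def by auto
lemma mpos: "0 < m x" using wg unfolding weighted_graph_def by auto
lemma mnz[simp]: "m x \<noteq> 0" using mpos[of x] by auto

lemma adj_iff: "adj w x y \<longleftrightarrow> w x y \<noteq> 0"
  using wnn[of x y] unfolding adj_def by auto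
lemma adj_sym: "adj w x y \<longleftrightarrow> adj w y x" unfolding adj_def using wsym by auto
lemma adj_irrefl[simp]: "\<not> adj w x x" unfolding adj_def by auto

lemma Lap_eq: "Lap w m f x = (\<Sum>y\<in>UNIV. w x y / m x * (f y - f x))"
  unfolding Lap_def by (simp add: sum_distrib_left)

lemma Deg_eq: "Deg w m x = (\<Sum>y\<in>UNIV. w x y / m x)"
  unfolding Deg_def by (simp add: sum_distrib_left)

lemma Gam_eq: "Gam w m f g x = (\<Sum>y\<in>UNIV. w x y / m x * (f y - f x) * (g y - g x)) / 2"
proof -
  have "Lap w m (\<lambda>z. f z * g z) x - f x * Lap w m g x - g x * Lap w m f x
      = (\<Sum>y\<in>UNIV. w x y / m x * (f y * g y - f x * g x) - f x * (w x y / m x * (g y - g x))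
          - g x * (w x y / m x * (f y - f x)))"
    unfolding Lap_eq by (simp add: sum_subtractf sum_distrib_left)
  also have "\<dots> = (\<Sum>y\<in>UNIV. w x y / m x * (f y - f x) * (g y - g x))"
    by (rule sum.cong) (auto simp: field_simps)
  finally show ?thesis unfolding Gam_def by simp
qed

lemma Gam_sym: "Gam w m f g = Gam w m g f"
  unfolding Gam_def by (auto simp: mult.commute)

lemma Gam_nonneg: "0 \<le> Gam w m f f x"
proof -
  have "0 \<le> (\<Sum>y\<in>UNIV. w x y / m x * (f y - f x) * (f y - f x))"
  proof (rule sum_nonneg)
    fix y
    have "0 \<le> w x y / m x" by (intro divide_nonneg_pos wnn mpos)
    then show "0 \<le> w x y / m x * (f y - f x) * (f y - f x)"
      by (metis mult.assoc mult_nonneg_nonneg zero_le_square)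
  qed
  then show ?thesis unfolding Gam_eq by simp
qed

lemma Lap_lin: "Lap w m (\<lambda>z. a * f z + b * g z) x = a * Lap w m f x + b * Lap w m g x"
proof -
  have "Lap w m (\<lambda>z. a * f z + b * g z) x = (\<Sum>y\<in>UNIV. a * (w x y / m x * (f y - f x)) + b * (w x y / m x * (g y - g x)))"
    unfolding Lap_eq by (rule sum.cong) (auto simp: field_simps)
  then show ?thesis unfolding Lap_eq by (simp add: sum.distrib sum_distrib_left)
qed

lemma Lap_lin_fun: "Lap w m (\<lambda>z. a * f z + b * g z) = (\<lambda>x. a * Lap w m f x + b * Lap w m g x)"
  using Lap_lin by auto

lemma Lap_scale: "Lap w m (\<lambda>z. a * f z) x = a * Lap w m f x"
  using Lap_lin[of a f 0 f x] by simp

lemma Lap_const: "Lap w m (\<lambda>z. c) x = 0"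
  unfolding Lap_eq by simp

lemma sum_m_Lap: "(\<Sum>x\<in>UNIV. m x * Lap w m f x) = 0"
proof -
  have "(\<Sum>x\<in>UNIV. m x * Lap w m f x) = (\<Sum>x\<in>UNIV. \<Sum>y\<in>UNIV. w x y * f y) - (\<Sum>x\<in>UNIV. \<Sum>y\<in>UNIV. w x y * f x)"
    unfolding Lap_def by (simp add: sum_subtractf algebra_simps)
  also have "(\<Sum>x\<in>UNIV. \<Sum>y\<in>UNIV. w x y * f y) = (\<Sum>y\<in>UNIV. \<Sum>x\<in>UNIV. w x y * f y)"
    by (rule sum.swap)
  also have "\<dots> = (\<Sum>y\<in>UNIV. \<Sum>x\<in>UNIV. w y x * f y)"
    by (simp add: wsym)
  finally show ?thesis by simp
qed

lemma sum_m_fLap_sym: "(\<Sum>x\<in>UNIV. m x * f x * Lap w m g x) = (\<Sum>x\<in>UNIV. m x * g x * Lap w m f x)"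
proof -
  have e: "\<And>f g. (\<Sum>x\<in>UNIV. m x * f x * Lap w m g x) = (\<Sum>x\<in>UNIV. \<Sum>y\<in>UNIV. w x y * f x * g y) - (\<Sum>x\<in>UNIV. \<Sum>y\<in>UNIV. w x y * f x * g x)"
    unfolding Lap_def by (simp add: sum_subtractf sum_distrib_left algebra_simps)
  have s: "(\<Sum>x\<in>UNIV. \<Sum>y\<in>UNIV. w x y * f x * g y) = (\<Sum>x\<in>UNIV. \<Sum>y\<in>UNIV. w x y * g x * f y)"
    by (subst sum.swap) (simp add: wsym mult.commute mult.left_commute)
  show ?thesis unfolding e s by (simp add: mult.commute mult.left_commute)
qed

lemma sum_m_Gam: "(\<Sum>x\<in>UNIV. m x * Gam w m f g x) = - (\<Sum>x\<in>UNIV. m x * f x * Lap w m g x)"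
proof -
  have "(\<Sum>x\<in>UNIV. m x * Gam w m f g x) = ((\<Sum>x\<in>UNIV. m x * Lap w m (\<lambda>z. f z * g z) x)
      - (\<Sum>x\<in>UNIV. m x * f x * Lap w m g x) - (\<Sum>x\<in>UNIV. m x * g x * Lap w m f x)) / 2"
  proof -
    have "\<And>x. m x * Gam w m f g x = (m x * Lap w m (\<lambda>z. f z * g z) x - m x * f x * Lap w m g x - m x * g x * Lap w m f x) / 2"
      unfolding Gam_def by (simp add: algebra_simps)
    then have "(\<Sum>x\<in>UNIV. m x * Gam w m f g x) = (\<Sum>x\<in>UNIV. (m x * Lap w m (\<lambda>z. f z * g z) x - m x * f x * Lap w m g x - m x * g x * Lap w m f x) / 2)"
      by (intro sum.cong) auto
    then show ?thesis by (simp add: sum_subtractf sum_divide_distrib[symmetric])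
  qed
  then show ?thesis using sum_m_Lap sum_m_fLap_sym[of f g] by simp
qed

end


context wgraph
begin

lemma Gam_lin_left: "Gam w m (\<lambda>z. a * f z + b * g z) h x = a * Gam w m f h x + b * Gam w m g h x"
proof -
  have "Gam w m (\<lambda>z. a * f z + b * g z) h x = (\<Sum>y\<in>UNIV. a * (w x y / m x * (f y - f x) * (h y - h x)) + b * (w x y / m x * (g y - g x) * (h y - h x))) / 2"
    unfolding Gam_eq by (intro arg_cong[where f="\<lambda>t. t / 2"] sum.cong) (auto simp: field_simps)
  then show ?thesis unfolding Gam_eq by (simp add: sum.distrib sum_distrib_left add_divide_distrib)
qed

lemma Gam_lin_left_fun: "Gam w m (\<lambda>z. a * f z + b * g z) h = (\<lambda>x. a * Gam w m f h x + b * Gam w m g h x)"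
  using Gam_lin_left by auto

lemma Gam_lin_right_fun: "Gam w m h (\<lambda>z. a * f z + b * g z) = (\<lambda>x. a * Gam w m h f x + b * Gam w m h g x)"
  using Gam_lin_left_fun[of a f b g h] Gam_sym by metis

lemma Gam2_sym: "Gam2 w m f g = Gam2 w m g f"
  unfolding Gam2_def by (auto simp: Gam_sym algebra_simps)

lemma Gam2_lin_left: "Gam2 w m (\<lambda>z. a * f z + b * g z) h x = a * Gam2 w m f h x + b * Gam2 w m g h x"
proof -
  have "Gam2 w m (\<lambda>z. a * f z + b * g z) h x =
    (Lap w m (\<lambda>x. a * Gam w m f h x + b * Gam w m g h x) x - (a * Gam w m f (Lap w m h) x + b * Gam w m g (Lap w m h) x)
     - Gam w m h (\<lambda>x. a * Lap w m f x + b * Lap w m g x) x) / 2"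
    unfolding Gam2_def Gam_lin_left_fun Lap_lin_fun by simp
  also have "\<dots> = a * Gam2 w m f h x + b * Gam2 w m g h x"
    unfolding Lap_lin Gam_lin_right_fun Gam2_def by (simp add: algebra_simps add_divide_distrib diff_divide_distrib)
  finally show ?thesis .
qed

lemma Gam_add_left: "Gam w m (\<lambda>z. f z + b * g z) h = (\<lambda>x. Gam w m f h x + b * Gam w m g h x)"
  using Gam_lin_left_fun[where a=1 and b=b and f=f and g=g and h=h] by simp

lemma Gam_add_right: "Gam w m h (\<lambda>z. f z + b * g z) = (\<lambda>x. Gam w m h f x + b * Gam w m h g x)"
  using Gam_lin_right_fun[where a=1 and b=b and f=f and g=g and h=h] by simp

lemma Gam2_add_left: "Gam2 w m (\<lambda>z. f z + b * g z) h x = Gam2 w m f h x + b * Gam2 w m g h x"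
  using Gam2_lin_left[where a=1 and b=b and f=f and g=g and h=h and x=x] by simp

lemma Gam2_add_right: "Gam2 w m h (\<lambda>z. f z + b * g z) x = Gam2 w m h f x + b * Gam2 w m h g x"
  using Gam2_add_left[of f b g h x] Gam2_sym[of h] by metis

lemma Gam_quad: "Gam w m (\<lambda>z. f z + t * g z) (\<lambda>z. f z + t * g z) x
   = Gam w m f f x + 2 * t * Gam w m f g x + t^2 * Gam w m g g x"
proof -
  have "Gam w m (\<lambda>z. f z + t * g z) (\<lambda>z. f z + t * g z) x
    = Gam w m f f x + t * Gam w m f g x + t * (Gam w m g f x + t * Gam w m g g x)"
    unfolding Gam_add_left Gam_add_right by simp
  also have "Gam w m g f x = Gam w m f g x" by (simp add: Gam_sym)
  finally show ?thesis by (simp add: power2_eq_square algebra_simps)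
qed

lemma Gam2_quad: "Gam2 w m (\<lambda>z. f z + t * g z) (\<lambda>z. f z + t * g z) x
   = Gam2 w m f f x + 2 * t * Gam2 w m f g x + t^2 * Gam2 w m g g x"
proof -
  have "Gam2 w m (\<lambda>z. f z + t * g z) (\<lambda>z. f z + t * g z) x
    = Gam2 w m f f x + t * Gam2 w m f g x + t * (Gam2 w m g f x + t * Gam2 w m g g x)"
    unfolding Gam2_add_left Gam2_add_right by simp
  also have "Gam2 w m g f x = Gam2 w m f g x" by (simp add: Gam2_sym)
  finally show ?thesis by (simp add: power2_eq_square algebra_simps)
qed

lemma eig_sums:
  assumes eig: "\<And>x. Lap w m f x = - l * f x"
  shows "(\<Sum>x\<in>UNIV. m x * Gam w m f f x) = l * (\<Sum>x\<in>UNIV. m x * (f x)^2)"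
    and "(\<Sum>x\<in>UNIV. m x * Gam2 w m f f x) = l^2 * (\<Sum>x\<in>UNIV. m x * (f x)^2)"
proof -
  show "(\<Sum>x\<in>UNIV. m x * Gam w m f f x) = l * (\<Sum>x\<in>UNIV. m x * (f x)^2)"
    unfolding sum_m_Gam eig by (simp add: sum_distrib_left power2_eq_square algebra_simps sum_negf)
  have LL: "Lap w m (Lap w m f) x = l^2 * f x" for x
  proof -
    have "Lap w m f = (\<lambda>z. (-l) * f z)" using eig by auto
    then show ?thesis using Lap_scale[of "-l" f x] eig[of x] by (simp add: power2_eq_square)
  qed
  have "\<And>x. m x * Gam2 w m f f x = (m x * Lap w m (Gam w m f f) x) / 2 - m x * Gam w m f (Lap w m f) x"
    unfolding Gam2_def by (simp add: field_simps)
  then have "(\<Sum>x\<in>UNIV. m x * Gam2 w m f f x) = (\<Sum>x\<in>UNIV. m x * Lap w m (Gam w m f f) x) / 2 - (\<Sum>x\<in>UNIV. m x * Gam w m f (Lap w m f) x)"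
    by (simp add: sum_subtractf sum_divide_distrib)
  also have "\<dots> = (\<Sum>x\<in>UNIV. m x * f x * Lap w m (Lap w m f) x)"
    unfolding sum_m_Lap sum_m_Gam by simp
  also have "\<dots> = l^2 * (\<Sum>x\<in>UNIV. m x * (f x)^2)"
    unfolding LL by (simp add: sum_distrib_left power2_eq_square algebra_simps)
  finally show "(\<Sum>x\<in>UNIV. m x * Gam2 w m f f x) = l^2 * (\<Sum>x\<in>UNIV. m x * (f x)^2)" .
qed

lemma sum_m_sq_pos:
  assumes "f x0 \<noteq> 0"
  shows "0 < (\<Sum>x\<in>UNIV. m x * (f x)^2)"
proof -
  have "0 < m x0 * (f x0)^2" using assms mpos by auto
  also have "\<dots> \<le> (\<Sum>x\<in>UNIV. m x * (f x)^2)"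
    by (rule member_le_sum) (auto intro!: mult_nonneg_nonneg less_imp_le[OF mpos])
  finally show ?thesis .
qed

lemma lichnerowicz:
  assumes cd: "CD_inf w m K" and eig: "\<And>x. Lap w m f x = - l * f x" and nz: "f x0 \<noteq> 0"
  shows "0 \<le> l" and "l = 0 \<or> K \<le> l"
proof -
  let ?s = "\<Sum>x\<in>UNIV. m x * (f x)^2"
  have s: "0 < ?s" using sum_m_sq_pos[of f x0, OF nz] .
  have "0 \<le> (\<Sum>x\<in>UNIV. m x * Gam w m f f x)"
    by (auto intro!: sum_nonneg mult_nonneg_nonneg less_imp_le[OF mpos] Gam_nonneg)
  then have "0 \<le> l * ?s" using eig_sums(1)[OF eig] by simp
  then show l0: "0 \<le> l" using s by (simp add: zero_le_mult_iff)
  have "(\<Sum>x\<in>UNIV. m x * (K * Gam w m f f x)) \<le> (\<Sum>x\<in>UNIV. m x * Gam2 w m f f x)"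
    using cd unfolding CD_inf_def by (auto intro!: sum_mono mult_left_mono less_imp_le[OF mpos])
  moreover have "(\<Sum>x\<in>UNIV. m x * (K * Gam w m f f x)) = K * (\<Sum>x\<in>UNIV. m x * Gam w m f f x)"
    by (simp add: sum_distrib_left algebra_simps)
  ultimately have "K * (l * ?s) \<le> l^2 * ?s"
    using eig_sums[OF eig] by simp
  then have "K * l \<le> l * l" using s by (simp add: power2_eq_square mult.assoc[symmetric] mult_le_cancel_right)
  then show "l = 0 \<or> K \<le> l" using l0
  proof (cases "l = 0")
    case False
    then have "0 < l" using l0 by simp
    then show ?thesis using \<open>K * l \<le> l * l\<close> by (simp add: mult_le_cancel_right)
  qed simp
qed

lemma quad_zero:
  fixes B q :: real
  assumes "\<And>t. 0 \<le> 2 * t * B + t^2 * q"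
  shows "B = 0"
proof (rule ccontr)
  assume B: "B \<noteq> 0"
  have q: "0 \<le> q" using assms[of "1"] assms[of "-1"] by simp
  define e where "e = 1 / (q + 1)"
  have e0: "0 < e" using q unfolding e_def by simp
  have eq: "e * q < 2" using q unfolding e_def by (simp add: field_simps)
  have "0 \<le> 2 * (- e * B) * B + (- e * B)^2 * q" by (rule assms)
  also have "\<dots> = (e * B^2) * (e * q - 2)" by (simp add: power2_eq_square algebra_simps)
  also have "\<dots> < 0" using e0 B eq by (intro mult_pos_neg) auto
  finally show False by simp
qed

lemma cd_eq:
  assumes cd: "CD_inf w m K" and eig: "\<And>x. Lap w m f x = - K * f x"
  shows "Gam2 w m f h x = K * Gam w m f h x"
proof -
  have pos: "0 \<le> m y * (Gam2 w m g g y - K * Gam w m g g y)" for g y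
    using cd unfolding CD_inf_def by (auto intro!: mult_nonneg_nonneg less_imp_le[OF mpos])
  have "(\<Sum>y\<in>UNIV. m y * (Gam2 w m f f y - K * Gam w m f f y))
      = (\<Sum>y\<in>UNIV. m y * Gam2 w m f f y) - K * (\<Sum>y\<in>UNIV. m y * Gam w m f f y)"
    by (simp add: algebra_simps sum_subtractf sum_distrib_left)
  also have "\<dots> = 0" unfolding eig_sums[OF eig] by (simp add: power2_eq_square)
  finally have "\<forall>y\<in>UNIV. m y * (Gam2 w m f f y - K * Gam w m f f y) = 0"
    by (subst (asm) sum_nonneg_eq_0_iff) (auto intro: pos)
  then have Q0: "Gam2 w m f f x - K * Gam w m f f x = 0" using mpos[of x] by simp
  show ?thesis
  proof -
    have "0 \<le> 2 * t * (Gam2 w m f h x - K * Gam w m f h x) + t^2 * (Gam2 w m h h x - K * Gam w m h h x)" for t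
    proof -
      have "0 \<le> Gam2 w m (\<lambda>z. f z + t * h z) (\<lambda>z. f z + t * h z) x - K * Gam w m (\<lambda>z. f z + t * h z) (\<lambda>z. f z + t * h z) x"
        using cd unfolding CD_inf_def by auto
      then show ?thesis unfolding Gam2_quad Gam_quad using Q0 by (simp add: algebra_simps)
    qed
    then show ?thesis using quad_zero[of "Gam2 w m f h x - K * Gam w m f h x" "Gam2 w m h h x - K * Gam w m h h x"] by simp
  qed
qed

end


lemma sum_delta_mult: "(\<Sum>u\<in>(UNIV::'a::finite set). (a u :: real) * (if u = z then c else 0)) = a z * c"
proof -
  have "(\<Sum>u\<in>UNIV. a u * (if u = z then c else 0)) = (\<Sum>u\<in>UNIV. if u = z then a u * c else 0)"
    by (rule sum.cong) auto
  then show ?thesis by simp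
qed

context wgraph
begin

definition dlt :: "'v \<Rightarrow> 'v \<Rightarrow> real" where "dlt z = (\<lambda>u. if u = z then 1 else 0)"

lemma Gam_dlt: "Gam w m f (dlt z) u = (if u = z then - Lap w m f u / 2 else w u z / m u * (f z - f u) / 2)"
proof (cases "u = z")
  case True
  have "(\<Sum>v\<in>UNIV. w u v / m u * (f v - f u) * (dlt z v - dlt z u)) = (\<Sum>v\<in>UNIV. - (w u v / m u * (f v - f u)))"
    by (rule sum.cong) (auto simp: dlt_def True)
  then show ?thesis unfolding Gam_eq Lap_eq using True by (simp add: sum_negf)
next
  case False
  have "(\<Sum>v\<in>UNIV. w u v / m u * (f v - f u) * (dlt z v - dlt z u)) = (\<Sum>v\<in>UNIV. (w u v / m u * (f v - f u)) * (if v = z then 1 else 0))"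
    by (rule sum.cong) (auto simp: dlt_def False)
  also have "\<dots> = w u z / m u * (f z - f u)"
    by (rule trans[OF sum_delta_mult]) simp
  finally show ?thesis unfolding Gam_eq using False by simp
qed

lemma Lap_dlt: "Lap w m (dlt z) u = w u z / m u - (if u = z then Deg w m u else 0)"
proof -
  have "Lap w m (dlt z) u = (\<Sum>v\<in>UNIV. (w u v / m u) * (if v = z then 1 else 0)) - (\<Sum>v\<in>UNIV. w u v / m u * dlt z u)"
    unfolding Lap_eq by (simp add: sum_subtractf algebra_simps dlt_def)
  also have "\<dots> = w u z / m u - (if u = z then Deg w m u else 0)"
    unfolding sum_delta_mult Deg_eq by (simp add: dlt_def sum_distrib_right)
  finally show ?thesis .
qed

lemma Gam_dlt_left: "Gam w m (dlt z) f u = (if u = z then - Lap w m f u / 2 else w u z / m u * (f z - f u) / 2)"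
  using Gam_dlt Gam_sym by metis

lemma Gam2_far:
  assumes zx: "z \<noteq> x" and wxz: "w x z = 0"
  shows "Gam w m f (dlt z) x = 0"
    and "Gam2 w m f (dlt z) x = (\<Sum>y\<in>UNIV. w x y / m x * (w y z / m y) * (f z - 2 * f y + f x)) / 4"
proof -
  show G0: "Gam w m f (dlt z) x = 0" unfolding Gam_dlt using zx wxz by simp
  have L1: "Lap w m (Gam w m f (dlt z)) x = (\<Sum>y\<in>UNIV. w x y / m x * (w y z / m y * (f z - f y))) / 2"
  proof -
    have "Lap w m (Gam w m f (dlt z)) x = (\<Sum>y\<in>UNIV. w x y / m x * Gam w m f (dlt z) y)"
      unfolding Lap_eq G0 by simp
    also have "\<dots> = (\<Sum>y\<in>UNIV. w x y / m x * (w y z / m y * (f z - f y)) / 2)"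
      by (rule sum.cong) (auto simp: Gam_dlt wxz)
    finally show ?thesis by (simp add: sum_divide_distrib)
  qed
  have L2: "Gam w m f (Lap w m (dlt z)) x = (\<Sum>y\<in>UNIV. w x y / m x * (f y - f x) * (w y z / m y)) / 2"
    unfolding Gam_eq
    by (intro arg_cong[where f="\<lambda>t. t / 2"] sum.cong) (auto simp: Lap_dlt wxz zx zx[symmetric])
  have L3: "Gam w m (dlt z) (Lap w m f) x = 0"
    unfolding Gam_dlt_left using zx wxz by simp
  have "Gam2 w m f (dlt z) x = ((\<Sum>y\<in>UNIV. w x y / m x * (w y z / m y * (f z - f y))) - (\<Sum>y\<in>UNIV. w x y / m x * (f y - f x) * (w y z / m y))) / 4"
    unfolding Gam2_def L1 L2 L3 by (simp add: field_simps)
  also have "\<dots> = (\<Sum>y\<in>UNIV. w x y / m x * (w y z / m y) * (f z - 2 * f y + f x)) / 4"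
    by (simp add: sum_subtractf[symmetric], intro arg_cong[where f="\<lambda>t. t / 4"] sum.cong) (auto simp: field_simps)
  finally show "Gam2 w m f (dlt z) x = (\<Sum>y\<in>UNIV. w x y / m x * (w y z / m y) * (f z - 2 * f y + f x)) / 4" .
qed

lemma Gam2_near:
  assumes xy: "w x y \<noteq> 0" and hg: "\<And>v. w x v \<noteq> 0 \<Longrightarrow> g v = g x + 1"
    and eig: "\<And>u. Lap w m g u = - K * g u"
  shows "Gam w m g (dlt y) x = w x y / m x / 2"
    and "Gam2 w m g (dlt y) x = (K * (w x y / m x) * g y - (\<Sum>u\<in>UNIV. w x u / m x * (w u y / m u))
            + w x y / m x * Deg w m y + K * (w x y / m x)) / 4"
proof -
  have xny: "x \<noteq> y" using xy by auto
  have gy: "g y = g x + 1" using hg xy by auto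
  show G0: "Gam w m g (dlt y) x = w x y / m x / 2"
    unfolding Gam_dlt using xny gy by simp
  have S1: "(\<Sum>u\<in>UNIV. w x u / m x * Gam w m g (dlt y) u) = (\<Sum>u\<in>UNIV. (if u = y then w x y / m x * (K * g y / 2) else 0))"
  proof (rule sum.cong)
    fix u
    show "w x u / m x * Gam w m g (dlt y) u = (if u = y then w x y / m x * (K * g y / 2) else 0)"
    proof (cases "u = y")
      case True then show ?thesis unfolding Gam_dlt by (simp add: eig)
    next
      case False
      show ?thesis
      proof (cases "w x u = 0")
        case True then show ?thesis using False by simp
      next
        case nz: False
        then have "g u = g y" using hg gy by simp
        then show ?thesis unfolding Gam_dlt using False by simp
      qed
    qed
  qed simp
  have LG: "Lap w m (Gam w m g (dlt y)) x = w x y / m x * (K * g y / 2) - Deg w m x * (w x y / m x / 2)"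
  proof -
    have "Lap w m (Gam w m g (dlt y)) x = (\<Sum>u\<in>UNIV. w x u / m x * Gam w m g (dlt y) u) - (\<Sum>u\<in>UNIV. w x u / m x) * Gam w m g (dlt y) x"
      unfolding Lap_eq by (simp add: sum_subtractf right_diff_distrib sum_distrib_right)
    then show ?thesis unfolding S1 G0 Deg_eq by simp
  qed
  have GL: "Gam w m g (Lap w m (dlt y)) x = ((\<Sum>u\<in>UNIV. w x u / m x * (w u y / m u)) - w x y / m x * Deg w m y - Deg w m x * (w x y / m x)) / 2"
  proof -
    have "Gam w m g (Lap w m (dlt y)) x = (\<Sum>u\<in>UNIV. w x u / m x * (w u y / m u) - (if u = y then w x y / m x * Deg w m y else 0) - w x u / m x * (w x y / m x)) / 2"
      unfolding Gam_eq
    proof (intro arg_cong[where f="\<lambda>t. t / 2"] sum.cong refl)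
      fix u
      show "w x u / m x * (g u - g x) * (Lap w m (dlt y) u - Lap w m (dlt y) x) =
         w x u / m x * (w u y / m u) - (if u = y then w x y / m x * Deg w m y else 0) - w x u / m x * (w x y / m x)"
      proof (cases "w x u = 0")
        case True then show ?thesis by (cases "u = y") (auto simp: xy)
      next
        case False
        then have "g u - g x = 1" using hg by simp
        then show ?thesis unfolding Lap_dlt using xny by (simp add: algebra_simps)
      qed
    qed
    also have "\<dots> = ((\<Sum>u\<in>UNIV. w x u / m x * (w u y / m u)) - w x y / m x * Deg w m y - Deg w m x * (w x y / m x)) / 2"
      by (simp add: sum_subtractf Deg_eq sum_distrib_right sum_divide_distrib[symmetric])
    finally show ?thesis .
  qed
  have GL2: "Gam w m (dlt y) (Lap w m g) x = - K * (w x y / m x) / 2"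
    unfolding Gam_dlt_left using xny gy by (simp add: eig algebra_simps)
  show "Gam2 w m g (dlt y) x = (K * (w x y / m x) * g y - (\<Sum>u\<in>UNIV. w x u / m x * (w u y / m u))
            + w x y / m x * Deg w m y + K * (w x y / m x)) / 4"
    unfolding Gam2_def LG GL GL2 by (simp add: field_simps)
qed

end


locale cdg = wgraph w m for w :: "'v::finite \<Rightarrow> 'v \<Rightarrow> real" and m +
  fixes K :: real
  assumes conn: "connected_graph w" and Kpos: "0 < K" and cd: "CD_inf w m K"
begin

lemma conn_closed:
  assumes "x0 \<in> C" and cl: "\<And>a b. a \<in> C \<Longrightarrow> adj w a b \<Longrightarrow> b \<in> C"
  shows "y \<in> C"
proof -
  obtain n where "(adj w ^^ n) x0 y" using conn unfolding connected_graph_def by blast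
  then show ?thesis
  proof (induction n arbitrary: y)
    case 0 then show ?case using assms(1) by simp
  next
    case (Suc n)
    from Suc.prems obtain z where "(adj w ^^ n) x0 z" "adj w z y" by (rule relpowp_Suc_E)
    then show ?case using Suc.IH cl by blast
  qed
qed

lemma pp_nonneg: "0 \<le> w a v / m a * (w v u / m v)"
  by (intro mult_nonneg_nonneg divide_nonneg_pos wnn mpos)

lemma pp_sum_pos:
  assumes "w a b \<noteq> 0" "w b u \<noteq> 0"
  shows "0 < (\<Sum>v\<in>UNIV. w a v / m a * (w v u / m v))"
proof -
  have "0 < w a b / m a * (w b u / m b)"
    using assms wnn[of a b] wnn[of b u] mpos[of a] mpos[of b] by (intro mult_pos_pos divide_pos_pos) auto
  also have "\<dots> \<le> (\<Sum>v\<in>UNIV. w a v / m a * (w v u / m v))"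
    by (rule member_le_sum) (use pp_nonneg in auto)
  finally show ?thesis .
qed

lemma E2:
  assumes eig: "\<And>u. Lap w m f u = - K * f u" and zx: "z \<noteq> x" and wxz: "w x z = 0"
  shows "(\<Sum>y\<in>UNIV. w x y / m x * (w y z / m y) * (f z - 2 * f y + f x)) = 0"
  using cd_eq[OF cd eig, of "dlt z" x] Gam2_far[OF zx wxz, of f] by simp

lemma E2':
  assumes eig: "\<And>u. Lap w m f u = - K * f u" and zx: "z \<noteq> x" and wxz: "w x z = 0"
    and hv: "\<And>v. w x v \<noteq> 0 \<Longrightarrow> w v z \<noteq> 0 \<Longrightarrow> f v = f x + c"
    and b: "w x b \<noteq> 0" "w b z \<noteq> 0"
  shows "f z = f x + 2 * c"
proof -
  have "(\<Sum>y\<in>UNIV. w x y / m x * (w y z / m y) * (f z - 2 * f y + f x))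
      = (\<Sum>y\<in>UNIV. w x y / m x * (w y z / m y) * (f z - f x - 2 * c))"
  proof (rule sum.cong)
    fix y
    show "w x y / m x * (w y z / m y) * (f z - 2 * f y + f x) = w x y / m x * (w y z / m y) * (f z - f x - 2 * c)"
      by (cases "w x y = 0"; cases "w y z = 0") (auto simp: hv)
  qed simp
  also have "\<dots> = (f z - f x - 2 * c) * (\<Sum>y\<in>UNIV. w x y / m x * (w y z / m y))"
    by (simp add: sum_distrib_left mult.commute)
  finally have "(f z - f x - 2 * c) * (\<Sum>y\<in>UNIV. w x y / m x * (w y z / m y)) = 0"
    using E2[OF eig zx wxz] by simp
  then show ?thesis using pp_sum_pos[OF b] by simp
qed

lemma eig_grad_zero:
  assumes eig: "\<And>u. Lap w m f u = - K * f u" and h0: "\<And>v. w x v \<noteq> 0 \<Longrightarrow> f v = f x"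
  shows "f y = 0"
proof -
  define C where "C = {a. f a = f x \<and> (\<forall>v. w a v \<noteq> 0 \<longrightarrow> f v = f a)}"
  have x0: "x \<in> C" using h0 by (simp add: C_def)
  have cl: "b \<in> C" if a: "a \<in> C" and ab: "adj w a b" for a b
  proof -
    have wab: "w a b \<noteq> 0" using ab adj_iff by simp
    have fa: "f a = f x" and ha: "\<And>v. w a v \<noteq> 0 \<Longrightarrow> f v = f a" using a by (auto simp: C_def)
    have fb: "f b = f a" using ha wab by simp
    have "f u = f b" if wbu: "w b u \<noteq> 0" for u
    proof (cases "u = a")
      case True then show ?thesis using fb by simp
    next
      case ua: False
      show ?thesis
      proof (cases "w a u = 0")
        case False then show ?thesis using ha fb by simp
      next
        case True
        have hv: "f v = f a + 0" if "w a v \<noteq> 0" "w v u \<noteq> 0" for v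
          using ha that by simp
        have "f u = f a + 2 * 0"
          by (rule E2'[OF eig ua True hv wab wbu])
        then show ?thesis using fb by simp
      qed
    qed
    then show "b \<in> C" using fa fb by (simp add: C_def)
  qed
  have allC: "z \<in> C" for z by (rule conn_closed[of x C z, OF x0 cl])
  then have const: "\<And>z. f z = f x" by (simp add: C_def)
  have "Lap w m f x = 0" unfolding Lap_eq
    by (rule sum.neutral) (metis const diff_self mult_zero_right)
  then have "f x = 0" using eig[of x] Kpos by simp
  then show ?thesis using const by simp
qed

definition G1 :: "'v \<Rightarrow> ('v \<Rightarrow> real) \<Rightarrow> bool" where
  "G1 x g \<longleftrightarrow> (\<forall>u. Lap w m g u = - K * g u) \<and> (\<forall>v. w x v \<noteq> 0 \<longrightarrow> g v = g x + 1)"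

lemma G1_Lap: assumes "G1 x g" shows "Lap w m g x = Deg w m x"
proof -
  have "Lap w m g x = (\<Sum>y\<in>UNIV. w x y / m x)"
    unfolding Lap_eq by (rule sum.cong) (use assms in \<open>auto simp: G1_def\<close>)
  then show ?thesis by (simp add: Deg_eq)
qed

lemma E1:
  assumes g: "G1 x g" and xy: "w x y \<noteq> 0"
  shows "w x y / m x * (Deg w m y - Deg w m x) = (\<Sum>u\<in>UNIV. w x u / m x * (w u y / m u))"
proof -
  have eig: "\<And>u. Lap w m g u = - K * g u" and hg: "\<And>v. w x v \<noteq> 0 \<Longrightarrow> g v = g x + 1"
    using g unfolding G1_def by auto
  note N = Gam2_near[OF xy hg eig]
  have "Gam2 w m g (dlt y) x = K * Gam w m g (dlt y) x" by (rule cd_eq[OF cd eig])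
  then have "(K * (w x y / m x) * g y - (\<Sum>u\<in>UNIV. w x u / m x * (w u y / m u)) + w x y / m x * Deg w m y + K * (w x y / m x)) / 4
     = K * (w x y / m x / 2)" using N by simp
  then have e: "K * (w x y / m x) * g y - (\<Sum>u\<in>UNIV. w x u / m x * (w u y / m u)) + w x y / m x * Deg w m y + K * (w x y / m x)
     = 2 * K * (w x y / m x)" by simp
  have gy: "g y = g x + 1" using hg xy by simp
  have gx: "K * g x = - Deg w m x" using G1_Lap[OF g] eig[of x] by simp
  have "K * (w x y / m x) * g y = (w x y / m x) * (K * g x) + K * (w x y / m x)"
    using gy by (simp add: algebra_simps add_divide_distrib)
  also have "\<dots> = - (w x y / m x) * Deg w m x + K * (w x y / m x)" using gx by simp
  finally have "K * (w x y / m x) * g y = - (w x y / m x) * Deg w m x + K * (w x y / m x)" .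
  then show ?thesis using e by (simp only: right_diff_distrib)
qed

end


locale cdg2 = cdg w m K for w :: "'v::finite \<Rightarrow> 'v \<Rightarrow> real" and m K +
  assumes gex: "\<And>x. \<exists>g. G1 x g"
begin

lemma T_nonneg: "0 \<le> (\<Sum>u\<in>UNIV. w x u / m x * (w u y / m u))"
  by (rule sum_nonneg) (rule pp_nonneg)

lemma Deg_adj_le: assumes "w x y \<noteq> 0" shows "Deg w m x \<le> Deg w m y"
proof -
  obtain g where g: "G1 x g" using gex by blast
  have h: "0 \<le> w x y / m x * (Deg w m y - Deg w m x)" using E1[OF g assms] T_nonneg[of x y] by linarith
  have p: "0 < w x y / m x" using assms wnn[of x y] mpos[of x] by (simp add: less_le)
  show ?thesis using zero_le_mult_iff[of "w x y / m x" "Deg w m y - Deg w m x"] h p by linarith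
qed

lemma Deg_adj: assumes "w x y \<noteq> 0" shows "Deg w m y = Deg w m x"
  using Deg_adj_le[OF assms] Deg_adj_le[of y x] assms wsym[of x y] by simp

lemma no_tri: assumes "w x y \<noteq> 0" "w x u \<noteq> 0" shows "w u y = 0"
proof -
  obtain g where g: "G1 x g" using gex by blast
  have "(\<Sum>u\<in>UNIV. w x u / m x * (w u y / m u)) = 0" using E1[OF g assms(1)] Deg_adj[OF assms(1)] by simp
  then have "\<forall>u\<in>UNIV. w x u / m x * (w u y / m u) = 0"
    by (subst (asm) sum_nonneg_eq_0_iff) (use pp_nonneg in auto)
  then show ?thesis using assms by auto
qed

lemma Deg_const: "Deg w m y = Deg w m x"
proof -
  have "y \<in> {a. Deg w m a = Deg w m x}"
    by (rule conn_closed[of x]) (auto simp: adj_iff dest: Deg_adj)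
  then show ?thesis by simp
qed

lemma edge: assumes yx: "w y x \<noteq> 0" shows "w y x / m y = K / 2"
proof -
  have xy: "w x y \<noteq> 0" using yx wsym by simp
  obtain g where g: "G1 x g" using gex by blast
  have eig: "\<And>u. Lap w m g u = - K * g u" and hg: "\<And>v. w x v \<noteq> 0 \<Longrightarrow> g v = g x + 1"
    using g unfolding G1_def by auto
  have gy: "g y = g x + 1" using hg xy by simp
  have far: "g u = g x + 2" if yu: "w y u \<noteq> 0" and ux: "u \<noteq> x" for u
  proof -
    have xu: "w x u = 0"
    proof (rule ccontr)
      assume "w x u \<noteq> 0"
      then have "w y u = 0" using no_tri[of x u y] xy by simp
      then show False using yu by simp
    qed
    have "g u = g x + 2 * 1"
      by (rule E2'[OF eig ux xu _ xy yu]) (use hg in simp)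
    then show ?thesis by simp
  qed
  have "Lap w m g y = (\<Sum>u\<in>UNIV. w y u / m y - (if u = x then 2 * (w y x / m y) else 0))"
    unfolding Lap_eq
  proof (rule sum.cong)
    fix u
    show "w y u / m y * (g u - g y) = w y u / m y - (if u = x then 2 * (w y x / m y) else 0)"
    proof (cases "u = x")
      case True then show ?thesis using gy by simp
    next
      case False
      show ?thesis
      proof (cases "w y u = 0")
        case False then show ?thesis using far[OF False \<open>u \<noteq> x\<close>] gy \<open>u \<noteq> x\<close> by simp
      qed (use \<open>u \<noteq> x\<close> in simp)
    qed
  qed simp
  also have "\<dots> = Deg w m y - 2 * (w y x / m y)"
    by (simp add: sum_subtractf Deg_eq)
  finally have "Lap w m g y = Deg w m y - 2 * (w y x / m y)" .
  moreover have "Lap w m g y = Deg w m x - K"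
    using eig[of y] eig[of x] G1_Lap[OF g] gy by (simp add: algebra_simps)
  ultimately show ?thesis using Deg_const[of y x] by simp
qed

lemma edge_val: "w x y / m x \<in> {0, K / 2}"
  using edge[of x y] by (cases "w x y = 0") auto

end


context cdg
begin

lemma gd_path: "(adj w ^^ gdist w z x0) z x0"
proof -
  obtain n where "(adj w ^^ n) z x0" using conn unfolding connected_graph_def by blast
  then show ?thesis unfolding gdist_def by (rule LeastI)
qed

lemma gd_min: "(adj w ^^ n) z x0 \<Longrightarrow> gdist w z x0 \<le> n"
  unfolding gdist_def by (rule Least_le)

lemma gd_self[simp]: "gdist w x0 x0 = 0"
  using gd_min[of 0 x0 x0] by simp

lemma gd_zero: "gdist w z x0 = 0 \<Longrightarrow> z = x0"
  using gd_path[of z x0] by simp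

lemma gd_adj: "adj w z u \<Longrightarrow> gdist w z x0 \<le> gdist w u x0 + 1"
  using gd_min[OF relpowp_Suc_I2[OF _ gd_path[of u x0]], of z] by simp

lemma gd_pred:
  assumes "0 < gdist w z x0"
  shows "\<exists>v. adj w z v \<and> gdist w v x0 + 1 = gdist w z x0"
proof -
  obtain k where k: "gdist w z x0 = Suc k" using assms by (cases "gdist w z x0") auto
  have "(adj w ^^ Suc k) z x0" using gd_path[of z x0] k by simp
  then obtain v where v: "adj w z v" "(adj w ^^ k) v x0" using relpowp_Suc_D2 by metis
  have "gdist w v x0 \<le> k" using gd_min[OF v(2)] .
  moreover have "gdist w z x0 \<le> gdist w v x0 + 1" using gd_adj[OF v(1)] .
  ultimately show ?thesis using v(1) k by (intro exI[of _ v]) auto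
qed

end

context cdg2
begin

lemma hss_ind:
  assumes g: "G1 x0 g"
  shows "gdist w z x0 = k \<Longrightarrow> g z = g x0 + real (gdist w z x0) \<and>
     (\<forall>u. w z u \<noteq> 0 \<longrightarrow> (gdist w u x0 = gdist w z x0 + 1 \<or> gdist w u x0 + 1 = gdist w z x0)
          \<and> g u = g x0 + real (gdist w u x0))"
proof (induction k arbitrary: z rule: less_induct)
  case (less k)
  let ?d = "\<lambda>z. gdist w z x0"
  have eig: "\<And>u. Lap w m g u = - K * g u" and hg: "\<And>v. w x0 v \<noteq> 0 \<Longrightarrow> g v = g x0 + 1"
    using g unfolding G1_def by auto
  have dadj: "?d u \<le> ?d z + 1 \<and> ?d z \<le> ?d u + 1" if "w z u \<noteq> 0" for z u
    using gd_adj[of z u x0] gd_adj[of u z x0] that adj_iff adj_sym by auto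
  show ?case
  proof (cases "k = 0")
    case True
    then have z: "z = x0" using less.prems gd_zero by simp
    show ?thesis
    proof (intro conjI allI impI)
      show "g z = g x0 + real (?d z)" using z by simp
    next
      fix u assume u: "w z u \<noteq> 0"
      then have "u \<noteq> x0" using z by auto
      then have "?d u \<noteq> 0" using gd_zero by blast
      moreover have "?d u \<le> 1" using dadj[OF u] z by simp
      ultimately have du: "?d u = 1" by simp
      then show "?d u = ?d z + 1 \<or> ?d u + 1 = ?d z" using z by simp
      show "g u = g x0 + real (?d u)" using hg u z du by simp
    qed
  next
    case False
    then obtain v where v: "adj w z v" "?d v + 1 = ?d z" using gd_pred[of z x0] less.prems by auto
    have wzv: "w z v \<noteq> 0" and wvz: "w v z \<noteq> 0" using v(1) adj_iff adj_sym by auto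
    have Pv: "g v = g x0 + real (?d v) \<and> (\<forall>u. w v u \<noteq> 0 \<longrightarrow> (?d u = ?d v + 1 \<or> ?d u + 1 = ?d v) \<and> g u = g x0 + real (?d u))"
      using less.IH[of "?d v" v] v less.prems by auto
    have gz: "g z = g x0 + real (?d z)" using Pv wvz by simp
    show ?thesis
    proof (intro conjI allI impI)
      show "g z = g x0 + real (?d z)" by (rule gz)
    next
      fix u assume u: "w z u \<noteq> 0"
      have "(?d u = ?d z + 1 \<or> ?d u + 1 = ?d z) \<and> g u = g x0 + real (?d u)"
      proof (cases "?d u < k")
        case True
        then have Pu: "g u = g x0 + real (?d u)" using less.IH[of "?d u" u] by auto
        have "?d u + 1 = ?d z" using dadj[OF u] True less.prems by auto
        then show ?thesis using Pu by simp
      next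
        case False
        then have uv: "u \<noteq> v" using v less.prems by auto
        have vu: "w v u = 0"
        proof (rule ccontr)
          assume "w v u \<noteq> 0"
          then have "w u z = 0" using no_tri[of v z u] wvz by simp
          then show False using u wsym by simp
        qed
        have hv: "g v' = g v + 1" if "w v v' \<noteq> 0" "w v' u \<noteq> 0" for v'
        proof -
          have a: "?d v' = ?d v + 1 \<or> ?d v' + 1 = ?d v" and b: "g v' = g x0 + real (?d v')"
            using Pv that(1) by auto
          have "?d u \<le> ?d v' + 1" using dadj[OF that(2)] by simp
          then have "?d v' = ?d v + 1" using a False v less.prems by auto
          then show ?thesis using b Pv by simp
        qed
        have gu: "g u = g v + 2 * 1"
          by (rule E2'[OF eig uv vu hv wvz u])
        have "?d u \<noteq> ?d z"
        proof
          assume duz: "?d u = ?d z"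
          then have "0 < ?d u" using less.prems \<open>k \<noteq> 0\<close> by simp
          then obtain v'' where v'': "adj w u v''" "?d v'' + 1 = ?d u" using gd_pred[of u x0] by auto
          have wuv: "w v'' u \<noteq> 0" using v''(1) adj_iff adj_sym by auto
          have "g u = g x0 + real (?d u)"
            using less.IH[of "?d v''" v''] v'' duz less.prems wuv by auto
          then show False using gu Pv v duz by simp
        qed
        then have "?d u = ?d z + 1" using dadj[OF u] False less.prems by auto
        then show ?thesis using gu Pv v by simp
      qed
      then show "?d u = ?d z + 1 \<or> ?d u + 1 = ?d z" and "g u = g x0 + real (?d u)" by auto
    qed
  qed
qed

end


lemma sum_if_const: "(\<Sum>u\<in>(UNIV::'a::finite set). if P u then (c::real) else 0) = real (card {u. P u}) * c"
proof -
  have "(\<Sum>u\<in>(UNIV::'a set). if P u then c else 0) = (\<Sum>u\<in>{u. P u}. c)"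
    by (simp add: sum.If_cases Int_def)
  then show ?thesis by simp
qed

context cdg2
begin

lemma Deg_max_eq: "Deg_max w m = Deg w m x"
proof -
  have "range (Deg w m) = {Deg w m x}" using Deg_const by auto
  then show ?thesis unfolding Deg_max_def by simp
qed

lemma edge': "w z y \<noteq> 0 \<Longrightarrow> w y z / m z = K / 2"
  using edge[of z y] wsym[of y z] by simp

lemma dminus:
  "d_minus w m x0 z = K / 2 * real (gdist w z x0)"
proof -
  obtain g where g: "G1 x0 g" using gex by blast
  let ?d = "\<lambda>z. gdist w z x0"
  have eig: "\<And>u. Lap w m g u = - K * g u" using g unfolding G1_def by auto
  have P: "\<And>z. g z = g x0 + real (?d z) \<and>
     (\<forall>u. w z u \<noteq> 0 \<longrightarrow> (?d u = ?d z + 1 \<or> ?d u + 1 = ?d z) \<and> g u = g x0 + real (?d u))"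
    using hss_ind[OF g] by blast
  define up where "up = {u. w z u \<noteq> 0 \<and> ?d u = ?d z + 1}"
  define dn where "dn = {u. w z u \<noteq> 0 \<and> ?d u + 1 = ?d z}"
  have T1: "w z u / m z = (if u \<in> up then K / 2 else 0) + (if u \<in> dn then K / 2 else 0)" for u
  proof (cases "w z u = 0")
    case True then show ?thesis by (simp add: up_def dn_def)
  next
    case False then show ?thesis using P[of z] edge[of z u] by (auto simp: up_def dn_def)
  qed
  have T2: "w z u / m z * (g u - g z) = (if u \<in> up then K / 2 else 0) - (if u \<in> dn then K / 2 else 0)" for u
  proof (cases "w z u = 0")
    case True then show ?thesis by (simp add: up_def dn_def)
  next
    case False
    have e: "w z u / m z = K / 2" using edge[of z u] False by simp
    have h: "?d u = ?d z + 1 \<or> ?d u + 1 = ?d z" and gu: "g u = g x0 + real (?d u)" and gz: "g z = g x0 + real (?d z)"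
      using P[of z] False by auto
    from h show ?thesis
    proof
      assume a: "?d u = ?d z + 1"
      then have "g u - g z = 1" using gu gz by simp
      then show ?thesis using a False e by (simp add: up_def dn_def)
    next
      assume a: "?d u + 1 = ?d z"
      then have "real (?d z) = real (?d u) + 1" by linarith
      then have "g u - g z = - 1" using gu gz by simp
      then show ?thesis using a False e by (simp add: up_def dn_def)
    qed
  qed
  have D1: "Deg w m z = real (card up) * (K/2) + real (card dn) * (K/2)"
    unfolding Deg_eq T1 sum.distrib by (simp add: sum_if_const[of "\<lambda>u. u \<in> up", simplified] sum_if_const[of "\<lambda>u. u \<in> dn", simplified])
  have L1: "Lap w m g z = real (card up) * (K/2) - real (card dn) * (K/2)"
    unfolding Lap_eq T2 sum_subtractf by (simp add: sum_if_const[of "\<lambda>u. u \<in> up", simplified] sum_if_const[of "\<lambda>u. u \<in> dn", simplified])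
  have L2: "Lap w m g z = Deg w m x0 - K * real (?d z)"
    using eig[of z] eig[of x0] G1_Lap[OF g] P[of z] by (simp add: algebra_simps)
  have cd: "real (card dn) = real (?d z)"
    using D1 L1 L2 Deg_const[of z x0] Kpos by (simp add: algebra_simps)
  have "{y. adj w y z \<and> ?d y < ?d z} = dn"
  proof -
    have "adj w y z \<and> ?d y < ?d z \<longleftrightarrow> y \<in> dn" for y
    proof
      assume a: "adj w y z \<and> ?d y < ?d z"
      then have "w z y \<noteq> 0" using adj_iff adj_sym by auto
      then show "y \<in> dn" using P[of z] a by (auto simp: dn_def)
    next
      assume "y \<in> dn" then show "adj w y z \<and> ?d y < ?d z" using adj_iff adj_sym by (auto simp: dn_def)
    qed
    then show ?thesis by auto
  qed
  then have "d_minus w m x0 z = (\<Sum>y\<in>dn. w y z / m z)" unfolding d_minus_def by simp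
  also have "\<dots> = (\<Sum>y\<in>dn. K / 2)"
    by (rule sum.cong[OF refl], rule edge') (simp add: dn_def)
  also have "\<dots> = K / 2 * real (?d z)" using cd by simp
  finally show ?thesis .
qed

lemma bip: "bipartite_graph w"
proof -
  fix x0
  obtain g where g: "G1 x0 g" using gex by blast
  have "\<forall>a b. adj w a b \<longrightarrow> even (gdist w a x0) \<noteq> even (gdist w b x0)"
  proof (intro allI impI)
    fix a b assume "adj w a b"
    then have "w a b \<noteq> 0" using adj_iff by simp
    then have "gdist w b x0 = gdist w a x0 + 1 \<or> gdist w b x0 + 1 = gdist w a x0"
      using hss_ind[OF g refl, of a] by simp
    then show "even (gdist w a x0) \<noteq> even (gdist w b x0)" by presburger
  qed
  then show ?thesis unfolding bipartite_graph_def by (intro exI[of _ "\<lambda>x. even (gdist w x x0)"]) simp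
qed

lemma hss:
  assumes ne: "w a b \<noteq> 0"
  shows "HSS w m (2 * Deg_max w m / K) (K / 2) x0"
proof -
  have Dpos: "0 < Deg w m a"
  proof -
    have "0 < w a b / m a" using ne wnn[of a b] mpos[of a] by (simp add: less_le)
    also have "\<dots> \<le> (\<Sum>y\<in>UNIV. w a y / m a)"
      by (rule member_le_sum) (auto intro!: divide_nonneg_pos wnn mpos)
    finally show ?thesis by (simp add: Deg_eq)
  qed
  have DM: "Deg_max w m = Deg w m a" by (rule Deg_max_eq)
  show ?thesis unfolding HSS_def
  proof (intro conjI allI)
    show "0 < 2 * Deg_max w m / K" using DM Dpos Kpos by simp
    show "0 < K / 2" using Kpos by simp
    fix x
    show "Deg w m x = 2 * Deg_max w m / K * (K / 2)" using DM Deg_const[of x a] Kpos by simp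
  next
    show "bipartite_graph w" by (rule bip)
  next
    fix x
    show "d_minus w m x0 x = K / 2 * real (gdist w x x0)" by (rule dminus)
  qed
qed

end


lemma quad_zero':
  fixes B q :: real
  assumes "\<And>t. 0 \<le> 2 * t * B + t^2 * q"
  shows "B = 0"
proof (rule ccontr)
  assume B: "B \<noteq> 0"
  have q: "0 \<le> q" using assms[of "1"] assms[of "-1"] by simp
  define e where "e = 1 / (q + 1)"
  have e0: "0 < e" using q unfolding e_def by simp
  have eq: "e * q < 2" using q unfolding e_def by (simp add: field_simps)
  have "0 \<le> 2 * (- e * B) * B + (- e * B)^2 * q" by (rule assms)
  also have "\<dots> = (e * B^2) * (e * q - 2)" by (simp add: power2_eq_square algebra_simps)
  also have "\<dots> < 0" using e0 B eq by (intro mult_pos_neg) auto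
  finally show False by simp
qed

lemma sym_inner:
  fixes S :: "real^'n^'n"
  assumes sym: "transpose S = S"
  shows "x \<bullet> (S *v y) = (S *v x) \<bullet> y"
proof -
  have "x \<bullet> (S *v y) = (x v* S) \<bullet> y" by (simp add: dot_lmul_matrix)
  also have "x v* S = transpose S *v x" by simp
  finally show ?thesis using sym by simp
qed

lemma exists_eig:
  fixes S :: "real^'n^'n"
  assumes sym: "transpose S = S" and U: "subspace U" and inv: "\<And>x. x \<in> U \<Longrightarrow> S *v x \<in> U"
    and x0: "x0 \<in> U" "x0 \<noteq> 0"
  shows "\<exists>u\<in>U. norm u = 1 \<and> S *v u = (u \<bullet> (S *v u)) *\<^sub>R u"
proof -
  let ?C = "sphere 0 1 \<inter> U"
  let ?q = "\<lambda>v. v \<bullet> (S *v v)"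
  have cC: "compact ?C" using closed_subspace[OF U] by (intro compact_Int_closed compact_sphere)
  have "x0 /\<^sub>R norm x0 \<in> ?C" using x0 U by (simp add: subspace_scale)
  then have neC: "?C \<noteq> {}" by blast
  have cq: "continuous_on ?C ?q"
    by (intro continuous_intros linear_continuous_on matrix_vector_mul_linear linear_linear[THEN iffD1])
  obtain u where uC: "u \<in> ?C" and umax: "\<And>y. y \<in> ?C \<Longrightarrow> ?q y \<le> ?q u"
    using continuous_attains_sup[OF cC neC cq] by blast
  define l where "l = ?q u"
  have uU: "u \<in> U" and nu: "norm u = 1" using uC by auto
  have uu: "u \<bullet> u = 1" using nu by (simp add: dot_square_norm)
  have A: "?q y \<le> l * (y \<bullet> y)" if yU: "y \<in> U" for y
  proof (cases "y = 0")
    case True then show ?thesis by simp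
  next
    case False
    let ?y = "y /\<^sub>R norm y"
    have "?y \<in> ?C" using False yU U by (simp add: subspace_scale)
    then have "?q ?y \<le> l" using umax l_def by blast
    moreover have "?q ?y = ?q y / (norm y)^2"
      by (simp add: matrix_vector_mult_scaleR inner_scaleR_left inner_scaleR_right power2_eq_square field_simps)
    moreover have "y \<bullet> y = (norm y)^2" by (simp add: dot_square_norm)
    moreover have "0 < (norm y)^2" using False by simp
    ultimately show ?thesis by (simp add: field_simps)
  qed
  have B: "x \<bullet> (S *v u - l *\<^sub>R u) = 0" if xU: "x \<in> U" for x
  proof -
    have "0 \<le> 2 * t * (- (x \<bullet> (S *v u - l *\<^sub>R u))) + t^2 * (l * (x \<bullet> x) - ?q x)" for t
    proof -
      have "u + t *\<^sub>R x \<in> U" using uU xU U by (simp add: subspace_add subspace_scale)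
      then have le: "?q (u + t *\<^sub>R x) \<le> l * ((u + t *\<^sub>R x) \<bullet> (u + t *\<^sub>R x))" by (rule A)
      have e1: "?q (u + t *\<^sub>R x) = l + 2 * t * (x \<bullet> (S *v u)) + t^2 * ?q x"
      proof -
        have "?q (u + t *\<^sub>R x) = ?q u + t * (u \<bullet> (S *v x)) + t * (x \<bullet> (S *v u)) + t^2 * ?q x"
          by (simp add: matrix_vector_right_distrib matrix_vector_mult_scaleR inner_add_left inner_add_right
              power2_eq_square algebra_simps)
        moreover have "u \<bullet> (S *v x) = x \<bullet> (S *v u)"
          using sym_inner[OF sym, of u x] by (simp add: inner_commute)
        ultimately show ?thesis unfolding l_def by simp
      qed
      have e2: "(u + t *\<^sub>R x) \<bullet> (u + t *\<^sub>R x) = 1 + 2 * t * (u \<bullet> x) + t^2 * (x \<bullet> x)"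
        using uu by (simp add: inner_add_left inner_add_right inner_commute power2_eq_square algebra_simps)
      show ?thesis using le unfolding e1 e2
        by (simp add: inner_diff_right inner_commute algebra_simps)
    qed
    then have "- (x \<bullet> (S *v u - l *\<^sub>R u)) = 0" by (rule quad_zero')
    then show ?thesis by simp
  qed
  have vU: "S *v u - l *\<^sub>R u \<in> U" using inv[OF uU] uU U by (simp add: subspace_diff subspace_scale)
  have "(S *v u - l *\<^sub>R u) \<bullet> (S *v u - l *\<^sub>R u) = 0" by (rule B[OF vU])
  then have "S *v u = l *\<^sub>R u" by simp
  then show ?thesis using uU nu l_def by auto
qed

lemma orth_eig_sets:
  fixes S :: "real^'n^'n"
  assumes sym: "transpose S = S"
  shows "k \<le> CARD('n) \<Longrightarrow> \<exists>B. finite B \<and> card B = k \<and> pairwise orthogonal B \<and>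
     (\<forall>b\<in>B. norm b = 1 \<and> S *v b = (b \<bullet> (S *v b)) *\<^sub>R b)"
proof (induction k)
  case 0 then show ?case by (intro exI[of _ "{}"]) auto
next
  case (Suc k)
  then obtain B where B: "finite B" "card B = k" "pairwise orthogonal B"
      and Bev: "\<And>b. b \<in> B \<Longrightarrow> norm b = 1 \<and> S *v b = (b \<bullet> (S *v b)) *\<^sub>R b" by auto
  have orth: "b \<bullet> b' = 0" if "b \<in> B" "b' \<in> B" "b \<noteq> b'" for b b'
    using B(3) that unfolding pairwise_def orthogonal_def by blast
  have bb: "b \<bullet> b = 1" if "b \<in> B" for b using Bev[OF that] by (simp add: dot_square_norm)
  define U where "U = {x. \<forall>b\<in>B. b \<bullet> x = 0}"
  have sU: "subspace U" unfolding subspace_def U_def by (auto simp: inner_add_right)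
  have inv: "S *v x \<in> U" if "x \<in> U" for x
  proof -
    have "b \<bullet> (S *v x) = 0" if "b \<in> B" for b
    proof -
      have "b \<bullet> (S *v x) = (S *v b) \<bullet> x" by (rule sym_inner[OF sym])
      also have "\<dots> = (b \<bullet> (S *v b)) * (b \<bullet> x)" using Bev[OF that] by (metis inner_scaleR_left)
      also have "\<dots> = 0" using \<open>x \<in> U\<close> that by (simp add: U_def)
      finally show ?thesis .
    qed
    then show ?thesis by (simp add: U_def)
  qed
  have "\<exists>x0\<in>U. x0 \<noteq> 0"
  proof (rule ccontr)
    assume "\<not> ?thesis"
    then have U0: "\<And>x. x \<in> U \<Longrightarrow> x = 0" by blast
    have "v \<in> span B" for v
    proof -
      define p where "p = v - (\<Sum>b\<in>B. (b \<bullet> v) *\<^sub>R b)"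
      have "p \<in> U"
      proof -
        have "b' \<bullet> p = 0" if b': "b' \<in> B" for b'
        proof -
          have "b' \<bullet> (\<Sum>b\<in>B. (b \<bullet> v) *\<^sub>R b) = (\<Sum>b\<in>B. (b \<bullet> v) * (b' \<bullet> b))"
            by (simp add: inner_sum_right)
          also have "\<dots> = (\<Sum>b\<in>B. if b = b' then b' \<bullet> v else 0)"
            by (rule sum.cong) (auto simp: orth b' bb)
          also have "\<dots> = b' \<bullet> v" using B(1) b' by simp
          finally show ?thesis unfolding p_def by (simp add: inner_diff_right)
        qed
        then show ?thesis by (simp add: U_def)
      qed
      then have "p = 0" by (rule U0)
      then have "v = (\<Sum>b\<in>B. (b \<bullet> v) *\<^sub>R b)" unfolding p_def by simp
      also have "\<dots> \<in> span B" by (intro span_sum span_scale span_base)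
      finally show ?thesis .
    qed
    then have "dim (UNIV :: (real^'n) set) \<le> card B"
      by (intro span_card_ge_dim B(1)) auto
    then show False using Suc.prems B(2) by simp
  qed
  then obtain x0 where x0: "x0 \<in> U" "x0 \<noteq> 0" by blast
  obtain u where uU: "u \<in> U" and nu: "norm u = 1" and ue: "S *v u = (u \<bullet> (S *v u)) *\<^sub>R u"
    using exists_eig[OF sym sU inv x0] by blast
  have uB: "u \<notin> B"
  proof
    assume "u \<in> B"
    then have "u \<bullet> u = 0" using uU by (simp add: U_def)
    then show False using nu by simp
  qed
  show ?case
  proof (intro exI[of _ "insert u B"] conjI)
    show "finite (insert u B)" using B(1) by simp
    show "card (insert u B) = Suc k" using B uB by simp
    show "pairwise orthogonal (insert u B)"
      using B(3) uU unfolding pairwise_insert orthogonal_def U_def by (auto simp: inner_commute)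
    show "\<forall>b\<in>insert u B. norm b = 1 \<and> S *v b = (b \<bullet> (S *v b)) *\<^sub>R b" using Bev nu ue by auto
  qed
qed

lemma mat_mult_vec: "mat t *v (v::real^'n) = t *\<^sub>R v"
proof -
  have "(mat t *v v) $ i = (\<Sum>j\<in>UNIV. if i = j then t * v$j else 0)" for i
    unfolding matrix_vector_mult_def mat_def by (simp only: vec_lambda_beta) (rule sum.cong, simp_all)
  then show ?thesis by (simp add: vec_eq_iff)
qed

lemma PTMP:
  fixes \<beta> :: "'n \<Rightarrow> real^'n" and M :: "real^'n^'n"
  defines "P \<equiv> (\<chi> r i. \<beta> i $ r)"
  shows "(transpose P ** M ** P) $ i $ j = \<beta> i \<bullet> (M *v \<beta> j)"
proof -
  have "(transpose P ** M ** P) $ i $ j = (\<Sum>s\<in>UNIV. (\<Sum>r\<in>UNIV. \<beta> i $ r * M $ r $ s) * \<beta> j $ s)"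
    by (simp add: P_def matrix_matrix_mult_def transpose_def)
  also have "\<dots> = (\<Sum>r\<in>UNIV. \<beta> i $ r * (\<Sum>s\<in>UNIV. M $ r $ s * \<beta> j $ s))"
  proof -
    have "(\<Sum>s\<in>UNIV. (\<Sum>r\<in>UNIV. \<beta> i $ r * M $ r $ s) * \<beta> j $ s) = (\<Sum>s\<in>UNIV. \<Sum>r\<in>UNIV. \<beta> i $ r * (M $ r $ s * \<beta> j $ s))"
      by (simp add: sum_distrib_right mult.assoc)
    also have "\<dots> = (\<Sum>r\<in>UNIV. \<Sum>s\<in>UNIV. \<beta> i $ r * (M $ r $ s * \<beta> j $ s))"
      by (rule sum.swap)
    also have "\<dots> = (\<Sum>r\<in>UNIV. \<beta> i $ r * (\<Sum>s\<in>UNIV. M $ r $ s * \<beta> j $ s))"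
      by (simp add: sum_distrib_left)
    finally show ?thesis .
  qed
  also have "\<dots> = \<beta> i \<bullet> (M *v \<beta> j)"
    by (simp add: inner_vec_def matrix_vector_mult_def)
  finally show ?thesis .
qed

lemma spectral:
  fixes S :: "real^'n^'n"
  assumes sym: "transpose S = S"
  shows "\<exists>(\<beta>::'n \<Rightarrow> real^'n) \<mu>. (\<forall>i j. \<beta> i \<bullet> \<beta> j = (if i = j then 1 else 0)) \<and> (\<forall>i. S *v \<beta> i = \<mu> i *\<^sub>R \<beta> i)
     \<and> (\<forall>t. det (mat t - S) = (\<Prod>i\<in>UNIV. t - \<mu> i))"
proof -
  obtain B where B: "finite B" "card B = CARD('n)" "pairwise orthogonal B"
      and Bev: "\<And>b. b \<in> B \<Longrightarrow> norm b = 1 \<and> S *v b = (b \<bullet> (S *v b)) *\<^sub>R b"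
    using orth_eig_sets[OF sym, of "CARD('n)"] by auto
  obtain \<beta> where bij: "bij_betw \<beta> (UNIV::'n set) B"
    using finite_same_card_bij[of "UNIV::'n set" B] B by auto
  define \<mu> where "\<mu> i = \<beta> i \<bullet> (S *v \<beta> i)" for i
  have inB: "\<beta> i \<in> B" for i using bij bij_betwE by blast
  have on: "\<beta> i \<bullet> \<beta> j = (if i = j then 1 else 0)" for i j
  proof (cases "i = j")
    case True then show ?thesis using Bev[OF inB[of i]] by (simp add: dot_square_norm)
  next
    case False
    then have "\<beta> i \<noteq> \<beta> j" using bij unfolding bij_betw_def inj_on_def by blast
    then show ?thesis using B(3) inB[of i] inB[of j] False unfolding pairwise_def orthogonal_def by auto
  qed
  have ev: "S *v \<beta> i = \<mu> i *\<^sub>R \<beta> i" for i using Bev[OF inB[of i]] by (simp add: \<mu>_def)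
  define P where "P = (\<chi> r i. (\<beta> i $ r :: real))"
  have PP: "transpose P ** P = mat 1"
  proof -
    have m1: "mat 1 $ i $ j = (if i = j then 1 else (0::real))" for i j by (simp add: mat_def)
    have e: "(transpose P ** P) $ i $ j = \<beta> i \<bullet> \<beta> j" for i j
      using PTMP[of \<beta> "mat 1" i j] unfolding P_def matrix_mul_rid matrix_vector_mul_lid .
    show ?thesis by (simp add: vec_eq_iff e on m1)
  qed
  have dP: "det (transpose P) * det P = 1"
    using det_mul[of "transpose P" P] PP by simp
  have dg: "transpose P ** (mat t - S) ** P = (\<chi> i j. if i = j then t - \<mu> i else 0)" for t
  proof -
    have "(transpose P ** (mat t - S) ** P) $ i $ j = (if i = j then t - \<mu> i else 0)" for i j
    proof -
      have "(mat t - S) *v \<beta> j = (t - \<mu> j) *\<^sub>R \<beta> j"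
        by (simp add: matrix_vector_mult_diff_rdistrib mat_mult_vec ev scaleR_diff_left)
      then show ?thesis unfolding P_def PTMP by (simp add: on)
    qed
    then show ?thesis by (simp add: vec_eq_iff)
  qed
  have dt: "det (mat t - S) = (\<Prod>i\<in>UNIV. t - \<mu> i)" for t
  proof -
    have "det (transpose P ** (mat t - S) ** P) = det (transpose P) * det (mat t - S) * det P"
      by (simp add: det_mul)
    also have "\<dots> = det (mat t - S)" using dP by (simp add: algebra_simps)
    finally have "det (mat t - S) = det (\<chi> i j. if i = j then t - \<mu> i else (0::real))"
      unfolding dg by simp
    also have "\<dots> = (\<Prod>i\<in>UNIV. t - \<mu> i)" by (subst det_diagonal) auto
    finally show ?thesis .
  qed
  show ?thesis
    apply (rule exI[where x=\<beta>])
    apply (rule exI[where x=\<mu>])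
    using on ev dt by auto
qed


lemma poly_det: "poly (det M) t = det (\<chi> i j. poly (M $ i $ j) t)"
  unfolding det_def by (simp add: poly_sum poly_prod)

lemma poly_char_poly_mat: "poly (char_poly_mat A) t = det (mat t - A)"
proof -
  have "(\<chi> i j. poly ((\<chi> i j. (if i = j then [:0, 1:] else 0) - [:A $ i $ j:]) $ i $ j) t) = mat t - A"
    by (simp add: vec_eq_iff mat_def)
  then show ?thesis unfolding char_poly_mat_def poly_det by simp
qed

lemma diag_conj:
  fixes M :: "real^'n^'n"
  shows "(\<chi> i j. if i = j then a i else 0) ** M ** (\<chi> i j. if i = j then b i else 0) = (\<chi> i j. a i * M $ i $ j * b j)"
proof -
  have "((\<chi> i j. if i = j then a i else 0) ** M ** (\<chi> i j. if i = j then b i else 0)) $ i $ j = a i * M $ i $ j * b j" for i j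
  proof -
    have e1: "((\<chi> i j. if i = j then a i else 0) ** M) $ i $ k = a i * M $ i $ k" for k
    proof -
      have "((\<chi> i j. if i = j then a i else 0) ** M) $ i $ k = (\<Sum>l\<in>UNIV. if i = l then a i * M $ l $ k else 0)"
        unfolding matrix_matrix_mult_def by (simp only: vec_lambda_beta) (rule sum.cong, simp_all)
      then show ?thesis by simp
    qed
    have "((\<chi> i j. if i = j then a i else 0) ** M ** (\<chi> i j. if i = j then b i else 0)) $ i $ j
       = (\<Sum>k\<in>UNIV. if k = j then a i * M $ i $ k * b j else 0)"
      unfolding matrix_matrix_mult_def[of "(\<chi> i j. if i = j then a i else 0) ** M"]
      by (simp only: vec_lambda_beta e1) (rule sum.cong, simp_all)
    then show ?thesis by simp
  qed
  then show ?thesis by (simp add: vec_eq_iff)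
qed

context wgraph
begin

definition Smat :: "real^'v^'v" where
  "Smat = (\<chi> x y. (if x = y then Deg w m x else 0) - w x y / (sqrt (m x) * sqrt (m y)))"

lemma Smat_sym: "transpose Smat = Smat"
  by (simp add: vec_eq_iff Smat_def transpose_def wsym mult.commute)

lemma negLap_entry: "negLap_matrix w m $ x $ y = (if x = y then Deg w m x else 0) - w x y / m x"
proof -
  have "Lap w m (\<lambda>z. if z = y then 1 else 0) x = w x y / m x - (if x = y then Deg w m x else 0)"
    using Lap_dlt[of y x] unfolding dlt_def by simp
  then show ?thesis unfolding negLap_matrix_def by simp
qed

lemma det_Smat: "det (mat t - negLap_matrix w m) = det (mat t - Smat)"
proof -
  let ?D = "(\<chi> i j. if i = j then sqrt (m i) else 0) :: real^'v^'v"
  let ?E = "(\<chi> i j. if i = j then 1 / sqrt (m i) else 0) :: real^'v^'v"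
  have sp: "0 < sqrt (m i)" for i using mpos by simp
  have ent: "sqrt (m i) * (mat t - negLap_matrix w m) $ i $ j * (1 / sqrt (m j)) = (mat t - Smat) $ i $ j" for i j
  proof (cases "i = j")
    case True then show ?thesis using sp[of i] by (simp add: mat_def negLap_entry Smat_def)
  next
    case False
    have g: "\<And>a b c::real. 0 < a \<Longrightarrow> 0 < b \<Longrightarrow> a * (c / (a * a)) * (1 / b) = c / (a * b)"
      by (simp add: field_simps)
    have mi: "sqrt (m i) * sqrt (m i) = m i" using mpos[of i] by simp
    have "sqrt (m i) * (w i j / m i) * (1 / sqrt (m j)) = w i j / (sqrt (m i) * sqrt (m j))"
      using g[OF sp[of i] sp[of j], of "w i j"] unfolding mi .
    then show ?thesis using False by (simp add: mat_def negLap_entry Smat_def)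
  qed
  have eqm: "?D ** (mat t - negLap_matrix w m) ** ?E = mat t - Smat"
    unfolding diag_conj by (simp only: vec_eq_iff vec_lambda_beta ent) simp
  have "det (?D ** (mat t - negLap_matrix w m) ** ?E) = det ?D * det (mat t - negLap_matrix w m) * det ?E"
    by (simp only: det_mul)
  then have "det (mat t - Smat) = det ?D * det (mat t - negLap_matrix w m) * det ?E"
    unfolding eqm .
  moreover have "det ?D * det ?E = 1"
  proof -
    have d1: "det ?D = (\<Prod>i\<in>UNIV. sqrt (m i))" by (subst det_diagonal) auto
    have d2: "det ?E = (\<Prod>i\<in>UNIV. 1 / sqrt (m i))" by (subst det_diagonal) auto
    have "det ?D * det ?E = (\<Prod>i\<in>UNIV. sqrt (m i) * (1 / sqrt (m i)))"
      unfolding d1 d2 by (rule prod.distrib[symmetric])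
    also have "\<dots> = 1"
      by (rule prod.neutral) (use sp in \<open>simp add: less_imp_neq[symmetric]\<close>)
    finally show ?thesis by simp
  qed
  ultimately show ?thesis by (simp add: algebra_simps)
qed

lemma Smat_Lap: "(Smat *v v) $ x = - sqrt (m x) * Lap w m (\<lambda>y. v $ y / sqrt (m y)) x"
proof -
  have sp: "0 < sqrt (m i)" for i using mpos by simp
  have "(Smat *v v) $ x = (\<Sum>y\<in>UNIV. ((if x = y then Deg w m x else 0) - w x y / (sqrt (m x) * sqrt (m y))) * v $ y)"
    by (simp add: Smat_def matrix_vector_mult_def)
  also have "\<dots> = Deg w m x * v $ x - (\<Sum>y\<in>UNIV. w x y / (sqrt (m x) * sqrt (m y)) * v $ y)"
  proof -
    have "(\<Sum>y\<in>UNIV. ((if x = y then Deg w m x else 0) - w x y / (sqrt (m x) * sqrt (m y))) * v $ y)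
      = (\<Sum>y\<in>UNIV. (if x = y then Deg w m x * v $ y else 0) - w x y / (sqrt (m x) * sqrt (m y)) * v $ y)"
      by (rule sum.cong) (auto simp: left_diff_distrib)
    then show ?thesis by (simp add: sum_subtractf)
  qed
  also have "\<dots> = - sqrt (m x) * Lap w m (\<lambda>y. v $ y / sqrt (m y)) x"
  proof -
    have L: "Lap w m (\<lambda>y. v $ y / sqrt (m y)) x = (\<Sum>y\<in>UNIV. w x y / m x * (v $ y / sqrt (m y))) - Deg w m x * (v $ x / sqrt (m x))"
      unfolding Lap_eq Deg_eq by (simp add: right_diff_distrib sum_subtractf sum_distrib_right sum_divide_distrib)
    have A: "sqrt (m x) * (\<Sum>y\<in>UNIV. w x y / m x * (v $ y / sqrt (m y))) = (\<Sum>y\<in>UNIV. w x y / (sqrt (m x) * sqrt (m y)) * v $ y)"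
      unfolding sum_distrib_left
    proof (rule sum.cong)
      fix y
      have g: "\<And>a b c d::real. 0 < a \<Longrightarrow> 0 < b \<Longrightarrow> a * (c / (a * a) * (d / b)) = c / (a * b) * d"
        by (simp add: field_simps)
      have mi: "sqrt (m x) * sqrt (m x) = m x" using mpos[of x] by simp
      show "sqrt (m x) * (w x y / m x * (v $ y / sqrt (m y))) = w x y / (sqrt (m x) * sqrt (m y)) * v $ y"
        using g[OF sp[of x] sp[of y], of "w x y" "v $ y"] unfolding mi .
    qed simp
    have V: "sqrt (m x) * (v $ x / sqrt (m x)) = v $ x" using sp[of x] by simp
    have "- sqrt (m x) * Lap w m (\<lambda>y. v $ y / sqrt (m y)) x
       = - (sqrt (m x) * (\<Sum>y\<in>UNIV. w x y / m x * (v $ y / sqrt (m y)))) + Deg w m x * (sqrt (m x) * (v $ x / sqrt (m x)))"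
      unfolding L by (simp add: algebra_simps)
    then show ?thesis unfolding A V by simp
  qed
  finally show ?thesis .
qed

end


lemma order_prod_lin:
  "order a (prod_list (map (\<lambda>l. [:- l, 1:]) ls)) = count (mset ls) (a::real)"
proof (induction ls)
  case Nil
  then show ?case by (simp add: order_0I)
next
  case (Cons x ls)
  have nz: "prod_list (map (\<lambda>l. [:- l, 1:]) ls) \<noteq> (0::real poly)"
    by (auto simp: prod_list_zero_iff)
  have nz1: "[:- x, 1:] \<noteq> (0::real poly)" by simp
  have nz2: "[:- x, 1:] * prod_list (map (\<lambda>l. [:- l, 1:]) ls) \<noteq> 0"
    using nz nz1 by (simp only: mult_eq_0_iff de_Morgan_disj) simp
  have o1: "order a [:- x, 1:] = (if a = x then 1 else 0)"
  proof (cases "a = x")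
    case True then show ?thesis using order_power_n_n[of x 1] by simp
  next
    case False
    have "poly [:- x, 1:] a \<noteq> 0" using False by simp
    then show ?thesis using False by (simp add: order_0I)
  qed
  show ?case using order_mult[OF nz2, of a] Cons.IH o1 by simp
qed

lemma sorted_charpoly_unique:
  fixes ls ls' :: "real list"
  assumes "sorted ls" "sorted ls'"
    and "prod_list (map (\<lambda>l. [:- l, 1:]) ls) = prod_list (map (\<lambda>l. [:- l, 1:]) ls')"
  shows "ls = ls'"
proof -
  have "mset ls = mset ls'"
    by (rule multiset_eqI) (metis order_prod_lin assms(3))
  then have "sort ls' = ls" by (rule properties_for_sort) (rule assms(1))
  moreover have "sort ls' = ls'" using assms(2) by (simp add: sorted_sort_id)
  ultimately show ?thesis by simp
qed

lemma prod_list_sort: "prod_list (map (f::real \<Rightarrow> 'b::comm_monoid_mult) (sort xs)) = prod_list (map f xs)"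
proof -
  have "prod_list (map f (sort xs)) = prod_mset (mset (map f (sort xs)))" by (simp only: prod_mset_prod_list)
  also have "\<dots> = prod_mset (mset (map f xs))" by simp
  also have "\<dots> = prod_list (map f xs)" by (simp only: prod_mset_prod_list)
  finally show ?thesis .
qed

lemma count_list_card: "count_list xs a = card {i. i < length xs \<and> xs ! i = a}"
proof -
  have "count_list xs a = length (filter (\<lambda>x. x = a) xs)"
    by (induction xs) auto
  then show ?thesis by (simp add: length_filter_conv_card)
qed

lemma count_list_map_distinct:
  assumes "distinct xs"
  shows "count_list (map f xs) a = card {i \<in> set xs. f i = a}"
proof -
  have "count_list (map f xs) a = length (filter (\<lambda>i. f i = a) xs)"
    by (induction xs) auto
  also have "\<dots> = card (set (filter (\<lambda>i. f i = a) xs))"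
    using assms by (simp add: distinct_card[symmetric])
  finally show ?thesis by simp
qed


context cdg
begin

lemma Lap_zero_const:
  assumes L0: "\<And>x. Lap w m f x = 0"
  shows "f y = f x"
proof -
  have "(\<Sum>z\<in>UNIV. m z * Gam w m f f z) = 0" unfolding sum_m_Gam L0 by simp
  then have G0: "\<forall>z\<in>UNIV. m z * Gam w m f f z = 0"
    by (subst (asm) sum_nonneg_eq_0_iff) (auto intro!: mult_nonneg_nonneg less_imp_le[OF mpos] Gam_nonneg)
  have nb: "f b = f a" if "w a b \<noteq> 0" for a b
  proof -
    have "Gam w m f f a = 0" using G0 mpos[of a] by auto
    then have s0: "(\<Sum>y\<in>UNIV. w a y / m a * (f y - f a) * (f y - f a)) = 0" unfolding Gam_eq by simp
    have "\<forall>y\<in>UNIV. w a y / m a * (f y - f a) * (f y - f a) = 0"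
    proof (subst sum_nonneg_eq_0_iff[symmetric])
      show "finite (UNIV :: 'v set)" by simp
      show "\<And>y. y \<in> UNIV \<Longrightarrow> 0 \<le> w a y / m a * (f y - f a) * (f y - f a)"
      proof -
        fix y
        have "0 \<le> w a y / m a" by (intro divide_nonneg_pos wnn mpos)
        then show "0 \<le> w a y / m a * (f y - f a) * (f y - f a)"
          by (metis mult.assoc mult_nonneg_nonneg zero_le_square)
      qed
      show "(\<Sum>y\<in>UNIV. w a y / m a * (f y - f a) * (f y - f a)) = 0" by (rule s0)
    qed
    then have "w a b / m a * (f b - f a) * (f b - f a) = 0" by simp
    then show ?thesis using that by simp
  qed
  have "y \<in> {z. f z = f x}"
    by (rule conn_closed[of x]) (auto simp: adj_iff dest: nb)
  then show ?thesis by simp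
qed

lemma eigfun:
  assumes "Smat *v v = l *\<^sub>R v"
  shows "Lap w m (\<lambda>y. v $ y / sqrt (m y)) x = - l * (v $ x / sqrt (m x))"
proof -
  have "- sqrt (m x) * Lap w m (\<lambda>y. v $ y / sqrt (m y)) x = l * v $ x"
  proof -
    have "(Smat *v v) $ x = l * v $ x" using assms by simp
    then show ?thesis using Smat_Lap[of v x] by simp
  qed
  moreover have "0 < sqrt (m x)" using mpos by simp
  ultimately show ?thesis by (simp add: field_simps)
qed

lemma eig_struct:
  "\<exists>(\<beta>::'v \<Rightarrow> real^'v) \<mu> xs. (\<forall>i j. \<beta> i \<bullet> \<beta> j = (if i = j then 1 else 0)) \<and> (\<forall>i. Smat *v \<beta> i = \<mu> i *\<^sub>R \<beta> i)
     \<and> set xs = UNIV \<and> distinct xs \<and> eigenvalues w m = sort (map \<mu> xs)"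
proof -
  obtain \<beta> :: "'v \<Rightarrow> real^'v" and \<mu> where on: "\<forall>i j. \<beta> i \<bullet> \<beta> j = (if i = j then 1 else 0)"
    and ev: "\<forall>i. Smat *v \<beta> i = \<mu> i *\<^sub>R \<beta> i" and dt: "\<forall>t. det (mat t - Smat) = (\<Prod>i\<in>UNIV. t - \<mu> i)"
    using spectral[OF Smat_sym] by metis
  obtain xs :: "'v list" where xs: "set xs = UNIV" "distinct xs"
    using finite_distinct_list[of "UNIV :: 'v set"] by auto
  have cp: "char_poly_mat (negLap_matrix w m) = (\<Prod>i\<in>UNIV. [:- \<mu> i, 1:])"
  proof -
    have "poly (char_poly_mat (negLap_matrix w m)) t = poly (\<Prod>i\<in>UNIV. [:- \<mu> i, 1:]) t" for t
      unfolding poly_char_poly_mat det_Smat using dt by (simp add: poly_prod)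
    then show ?thesis using poly_eq_poly_eq_iff[of "char_poly_mat (negLap_matrix w m)" "\<Prod>i\<in>UNIV. [:- \<mu> i, 1:]"] by auto
  qed
  have cpL: "char_poly_mat (negLap_matrix w m) = prod_list (map (\<lambda>l. [:- l, 1:]) (sort (map \<mu> xs)))"
  proof -
    have "(\<Prod>i\<in>UNIV. [:- \<mu> i, 1:]) = prod_list (map (\<lambda>i. [:- \<mu> i, 1:]) xs)"
      using prod.distinct_set_conv_list[OF xs(2), of "\<lambda>i. [:- \<mu> i, 1:]"] xs(1) by simp
    also have "\<dots> = prod_list (map (\<lambda>l. [:- l, 1:]) (map \<mu> xs))" by (simp add: comp_def)
    also have "\<dots> = prod_list (map (\<lambda>l. [:- l, 1:]) (sort (map \<mu> xs)))" by (rule prod_list_sort[symmetric])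
    finally show ?thesis using cp by simp
  qed
  have "eigenvalues w m = sort (map \<mu> xs)"
    unfolding eigenvalues_def
  proof (rule the_equality)
    show "sorted (sort (map \<mu> xs)) \<and> char_poly_mat (negLap_matrix w m) = prod_list (map (\<lambda>l. [:- l, 1:]) (sort (map \<mu> xs)))"
      using cpL by simp
  next
    fix ls assume a: "sorted ls \<and> char_poly_mat (negLap_matrix w m) = prod_list (map (\<lambda>l. [:- l, 1:]) ls)"
    then have e: "char_poly_mat (negLap_matrix w m) = prod_list (map (\<lambda>l. [:- l, 1:]) ls)" by simp
    have "prod_list (map (\<lambda>l. [:- l, 1:]) ls) = prod_list (map (\<lambda>l. [:- l, 1:]) (sort (map \<mu> xs)))"
      by (simp only: e[symmetric] cpL)
    then show "ls = sort (map \<mu> xs)"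
      using sorted_charpoly_unique[of ls "sort (map \<mu> xs)"] a by simp
  qed
  then show ?thesis
    apply (intro exI[where x=\<beta>] exI[where x=\<mu>] exI[where x=xs])
    using on ev xs by simp
qed

end


context cdg
begin

lemma deg_lt: "deg w x < CARD('v)"
proof -
  have "{y. adj w y x} \<subseteq> UNIV - {x}" by auto
  then have "deg w x \<le> card (UNIV - {x} :: 'v set)" unfolding deg_def by (intro card_mono) auto
  also have "\<dots> < CARD('v)" by (simp add: card_Diff_singleton)
  finally show ?thesis .
qed

lemma deg_max_lt: "deg_max w < CARD('v)"
proof -
  have "deg_max w \<in> range (deg w)" unfolding deg_max_def by (rule Max_in) auto
  then show ?thesis using deg_lt by auto
qed

lemma deg_le_max: "deg w x \<le> deg_max w"
  unfolding deg_max_def by (rule Max_ge) auto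

lemma deg_card: "deg w x = card {y. w x y \<noteq> 0}"
  unfolding deg_def by (rule arg_cong[where f=card]) (auto simp: adj_iff wsym)

lemma spec_count:
  assumes hK: "eigenvalues w m ! deg_max w = K"
  shows "\<exists>(\<beta>::'v \<Rightarrow> real^'v) \<mu>. (\<forall>i j. \<beta> i \<bullet> \<beta> j = (if i = j then 1 else 0)) \<and> (\<forall>i. Smat *v \<beta> i = \<mu> i *\<^sub>R \<beta> i)
     \<and> deg_max w \<le> card {i. \<mu> i = K} \<and> (\<exists>i. \<mu> i = K)"
proof -
  obtain \<beta> :: "'v \<Rightarrow> real^'v" and \<mu> xs where on: "\<forall>i j. \<beta> i \<bullet> \<beta> j = (if i = j then 1 else 0)"
    and ev: "\<forall>i. Smat *v \<beta> i = \<mu> i *\<^sub>R \<beta> i" and xs: "set xs = UNIV" "distinct xs"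
    and eL: "eigenvalues w m = sort (map \<mu> xs)"
    using eig_struct by metis
  define e where "e = eigenvalues w m"
  define \<phi> where "\<phi> i = (\<lambda>y. \<beta> i $ y / sqrt (m y))" for i
  have sp: "0 < sqrt (m y)" for y using mpos by simp
  have eig\<phi>: "Lap w m (\<phi> i) x = - \<mu> i * \<phi> i x" for i x
    unfolding \<phi>_def by (rule eigfun) (use ev in simp)
  have \<phi>nz: "\<exists>x. \<phi> i x \<noteq> 0" for i
  proof -
    have "\<beta> i \<noteq> 0" using on[rule_format, of i i] by auto
    then obtain x where "\<beta> i $ x \<noteq> 0" by (auto simp: vec_eq_iff)
    then show ?thesis using sp[of x] unfolding \<phi>_def by auto
  qed
  have spec: "\<mu> i = 0 \<or> K \<le> \<mu> i" for i
  proof -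
    obtain x where "\<phi> i x \<noteq> 0" using \<phi>nz by blast
    then show ?thesis using lichnerowicz(2)[OF cd, of "\<phi> i" "\<mu> i" x] eig\<phi> by blast
  qed
  have zero1: "card {i. \<mu> i = 0} \<le> 1"
  proof -
    have "i = j" if i0: "\<mu> i = 0" and j0: "\<mu> j = 0" for i j
    proof (rule ccontr)
      assume ij: "i \<noteq> j"
      fix z0 :: 'v
      have cst: "\<phi> k y = \<phi> k z0" if "\<mu> k = 0" for k y
        by (rule Lap_zero_const) (use eig\<phi> that in simp)
      have bb: "\<beta> k $ y = \<phi> k z0 * sqrt (m y)" if "\<mu> k = 0" for k y
        using cst[OF that, of y] sp[of y] unfolding \<phi>_def by (simp add: field_simps)
      define M where "M = (\<Sum>y\<in>UNIV. m y)"
      have ip: "\<beta> k \<bullet> \<beta> l = \<phi> k z0 * \<phi> l z0 * M" if "\<mu> k = 0" "\<mu> l = 0" for k l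
      proof -
        have "\<beta> k \<bullet> \<beta> l = (\<Sum>y\<in>UNIV. \<phi> k z0 * \<phi> l z0 * m y)"
          unfolding inner_vec_def
        proof (rule sum.cong)
          fix y
          have "sqrt (m y) * sqrt (m y) = m y" using mpos[of y] by simp
          then show "\<beta> k $ y \<bullet> \<beta> l $ y = \<phi> k z0 * \<phi> l z0 * m y"
            using bb[OF that(1), of y] bb[OF that(2), of y] by (simp add: algebra_simps)
        qed simp
        then show ?thesis unfolding M_def by (simp add: sum_distrib_left)
      qed
      have "1 = (\<phi> i z0 * \<phi> i z0 * M) * (\<phi> j z0 * \<phi> j z0 * M)"
        using ip[OF i0 i0] ip[OF j0 j0] on by simp
      also have "\<dots> = (\<phi> i z0 * \<phi> j z0 * M) * (\<phi> i z0 * \<phi> j z0 * M)" by (simp add: algebra_simps)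
      also have "\<dots> = 0" using ip[OF i0 j0] on ij by simp
      finally show False by simp
    qed
    then show ?thesis using card_le_Suc0_iff_eq[of "{i. \<mu> i = 0}"] by (auto simp: One_nat_def)
  qed
  have len: "length e = CARD('v)"
    using xs unfolding e_def eL by (simp add: distinct_card[symmetric])
  have sete: "set e = range \<mu>" using xs unfolding e_def eL by simp
  have cnt: "card {i. i < length e \<and> e ! i = a} = card {i. \<mu> i = a}" for a
  proof -
    have "card {i. i < length e \<and> e ! i = a} = count_list e a" by (simp add: count_list_card)
    also have "\<dots> = count (mset e) a" by (simp add: count_mset)
    also have "\<dots> = count (mset (map \<mu> xs)) a" unfolding e_def eL by simp
    also have "\<dots> = count_list (map \<mu> xs) a" by (simp only: count_mset)
    also have "\<dots> = card {i \<in> set xs. \<mu> i = a}" by (rule count_list_map_distinct[OF xs(2)])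
    finally show ?thesis using xs by simp
  qed
  define n where "n = deg_max w"
  have nlt: "n < length e" using deg_max_lt len n_def by simp
  have srt: "sorted e" unfolding e_def eL by simp
  have vals: "e ! i = 0 \<or> e ! i = K" if "i \<le> n" for i
  proof -
    have "e ! i \<le> e ! n" using srt that nlt by (intro sorted_nth_mono) auto
    then have le: "e ! i \<le> K" using hK unfolding e_def n_def by simp
    have "e ! i \<in> range \<mu>" using sete nth_mem[of i e] that nlt by auto
    then obtain j where "e ! i = \<mu> j" by auto
    then show ?thesis using spec[of j] le by auto
  qed
  have "{..n} \<subseteq> {i. i < length e \<and> e ! i = 0} \<union> {i. i < length e \<and> e ! i = K}"
    using vals nlt by auto
  then have "card {..n} \<le> card ({i. i < length e \<and> e ! i = 0} \<union> {i. i < length e \<and> e ! i = K})"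
    by (intro card_mono) auto
  also have "\<dots> \<le> card {i. i < length e \<and> e ! i = 0} + card {i. i < length e \<and> e ! i = K}"
    by (rule card_Un_le)
  also have "\<dots> \<le> 1 + card {i. \<mu> i = K}" using cnt zero1 by simp
  finally have cardF: "deg_max w \<le> card {i. \<mu> i = K}" unfolding n_def by simp
  have exK: "\<exists>i. \<mu> i = K"
  proof -
    have "e ! n \<in> range \<mu>" using sete nth_mem[OF nlt] by auto
    then show ?thesis using hK unfolding e_def n_def by auto
  qed
  show ?thesis
    apply (intro exI[where x=\<beta>] exI[where x=\<mu>])
    using on ev cardF exK by simp
qed

end


context cdg
begin

lemma gex_all:
  assumes hK: "eigenvalues w m ! deg_max w = K"
  shows "\<exists>g. G1 x g"
proof -
  obtain \<beta> :: "'v \<Rightarrow> real^'v" and \<mu> where on: "\<forall>i j. \<beta> i \<bullet> \<beta> j = (if i = j then 1 else 0)"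
    and ev: "\<forall>i. Smat *v \<beta> i = \<mu> i *\<^sub>R \<beta> i" and cardF: "deg_max w \<le> card {i. \<mu> i = K}"
    using spec_count[OF hK] by metis
  define F where "F = {i. \<mu> i = K}"
  define V where "V = span (\<beta> ` F)"
  define Lx where "Lx = (\<lambda>v::real^'v. \<chi> y. if w x y \<noteq> 0 then v $ y / sqrt (m y) - v $ x / sqrt (m x) else 0)"
  define T where "T = {v::real^'v. \<forall>y. w x y = 0 \<longrightarrow> v $ y = 0}"
  define N where "N = {y. w x y \<noteq> 0}"
  have linL: "linear Lx"
  proof (rule linearI)
    show "Lx (a + b) = Lx a + Lx b" for a b
      by (simp add: Lx_def vec_eq_iff add_divide_distrib)
    show "Lx (r *\<^sub>R b) = r *\<^sub>R Lx b" for r b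
      by (simp add: Lx_def vec_eq_iff algebra_simps)
  qed
  have subV: "subspace V" unfolding V_def by (rule subspace_span)
  have Veig: "Smat *v v = K *\<^sub>R v" if "v \<in> V" for v
  proof -
    have "V \<subseteq> {v. Smat *v v = K *\<^sub>R v}"
      unfolding V_def
    proof (rule span_minimal)
      show "\<beta> ` F \<subseteq> {v. Smat *v v = K *\<^sub>R v}" using ev by (auto simp: F_def)
      show "subspace {v. Smat *v v = K *\<^sub>R v}"
        by (auto simp: subspace_def matrix_vector_right_distrib matrix_vector_mult_scaleR scaleR_add_right)
    qed
    then show ?thesis using that by auto
  qed
  have inj: "inj_on Lx V"
  proof (rule inj_onI)
    fix u v assume u: "u \<in> V" and v: "v \<in> V" and e: "Lx u = Lx v"
    define d where "d = u - v"
    have dV: "d \<in> V" using u v subV unfolding d_def by (simp add: subspace_diff)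
    have Ld: "Lx d = 0" using e linear_diff[OF linL, of u v] unfolding d_def by simp
    define f where "f = (\<lambda>y. d $ y / sqrt (m y))"
    have eigf: "\<And>z. Lap w m f z = - K * f z" unfolding f_def by (rule eigfun[OF Veig[OF dV]])
    have gr: "f y = f x" if "w x y \<noteq> 0" for y
    proof -
      have "(Lx d) $ y = 0" using Ld by simp
      then show ?thesis using that by (simp add: Lx_def f_def)
    qed
    have "f y = 0" for y by (rule eig_grad_zero[OF eigf gr])
    then have "d = 0" unfolding f_def using mpos by (auto simp: vec_eq_iff)
    then show "u = v" unfolding d_def by simp
  qed
  have injb: "inj_on \<beta> F"
  proof (rule inj_onI)
    fix i j assume "\<beta> i = \<beta> j"
    then have "\<beta> i \<bullet> \<beta> j = 1" using on[rule_format, of i i] by simp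
    then show "i = j" using on[rule_format, of i j] by (auto split: if_splits)
  qed
  have indep: "independent (\<beta> ` F)"
  proof (rule pairwise_orthogonal_independent)
    show "pairwise orthogonal (\<beta> ` F)"
      unfolding pairwise_def orthogonal_def using on by auto
    show "0 \<notin> \<beta> ` F"
    proof
      assume "0 \<in> \<beta> ` F"
      then obtain i where "\<beta> i = 0" by auto
      then show False using on[rule_format, of i i] by simp
    qed
  qed
  have dimV: "dim V = card F"
    unfolding V_def using dim_span_eq_card_independent[OF indep] card_image[OF injb] by simp
  have dimLV: "dim (Lx ` V) = dim V"
    using dim_image_eq[OF linL, of V] inj unfolding V_def span_span by simp
  have subT: "subspace T" unfolding T_def subspace_def by auto
  have LVT: "Lx ` V \<subseteq> T" unfolding T_def Lx_def by auto
  have subLV: "subspace (Lx ` V)" by (rule linear_subspace_image[OF linL subV])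
  define B where "B = (\<lambda>y. axis y (1::real)) ` N"
  have dimT: "dim T \<le> card N"
  proof -
    have "dim T \<le> card B"
    proof (rule span_card_ge_dim)
      show "B \<subseteq> T" unfolding B_def T_def N_def by (auto simp: axis_def)
      show "finite B" unfolding B_def by simp
      show "T \<subseteq> span B"
      proof
        fix v assume vT: "v \<in> T"
        have "v = (\<Sum>y\<in>UNIV. v $ y *\<^sub>R axis y 1)"
          using basis_expansion[of v] by (simp add: scalar_mult_eq_scaleR)
        also have "\<dots> = (\<Sum>y\<in>N. v $ y *\<^sub>R axis y 1)"
          by (rule sum.mono_neutral_right) (use vT in \<open>auto simp: T_def N_def\<close>)
        also have "\<dots> \<in> span B"
          by (intro span_sum span_scale span_base) (auto simp: B_def)
        finally show "v \<in> span B" .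
      qed
    qed
    also have "\<dots> \<le> card N" unfolding B_def by (rule card_image_le) simp
    finally show ?thesis .
  qed
  have "card N = deg w x" unfolding N_def by (simp add: deg_card)
  then have "dim T \<le> dim (Lx ` V)" using dimT deg_le_max[of x] cardF dimLV dimV F_def by simp
  then have eqT: "Lx ` V = T" by (rule subspace_dim_equal[OF subLV subT LVT])
  define one where "one = (\<chi> y. if w x y \<noteq> 0 then 1 else (0::real))"
  have "one \<in> T" unfolding one_def T_def by simp
  then obtain v where vV: "v \<in> V" and Lv: "Lx v = one" using eqT by auto
  define g where "g = (\<lambda>y. v $ y / sqrt (m y))"
  have "G1 x g"
    unfolding G1_def
  proof (intro conjI allI impI)
    show "Lap w m g u = - K * g u" for u unfolding g_def by (rule eigfun[OF Veig[OF vV]])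
    fix y assume "w x y \<noteq> 0"
    moreover have "(Lx v) $ y = one $ y" using Lv by simp
    ultimately show "g y = g x + 1" by (simp add: Lx_def one_def g_def)
  qed
  then show ?thesis by blast
qed

lemma edge_exists:
  assumes hK: "eigenvalues w m ! deg_max w = K"
  shows "\<exists>a b. w a b \<noteq> 0"
proof (rule ccontr)
  assume "\<not> ?thesis"
  then have w0: "\<And>a b. w a b = 0" by blast
  obtain \<beta> :: "'v \<Rightarrow> real^'v" and \<mu> where on: "\<forall>i j. \<beta> i \<bullet> \<beta> j = (if i = j then 1 else 0)"
    and ev: "\<forall>i. Smat *v \<beta> i = \<mu> i *\<^sub>R \<beta> i" and exK: "\<exists>i. \<mu> i = K"
    using spec_count[OF hK] by metis
  obtain i where iK: "\<mu> i = K" using exK by blast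
  have "\<beta> i \<noteq> 0" using on[rule_format, of i i] by auto
  then obtain x where bx: "\<beta> i $ x \<noteq> 0" by (auto simp: vec_eq_iff)
  have "Lap w m (\<lambda>y. \<beta> i $ y / sqrt (m y)) x = - K * (\<beta> i $ x / sqrt (m x))"
    using eigfun[of "\<beta> i" "\<mu> i" x] ev iK by simp
  moreover have "Lap w m (\<lambda>y. \<beta> i $ y / sqrt (m y)) x = 0" unfolding Lap_eq by (simp add: w0)
  ultimately show False using bx Kpos mpos[of x] by simp
qed

end


theorem theorem4:
  fixes w :: "'v::finite \<Rightarrow> 'v \<Rightarrow> real" and m :: "'v \<Rightarrow> real" and K :: real
  assumes "weighted_graph w m"
    and "connected_graph w"
    and "K > 0"
    and "CD_inf w m K"
    and "eigenvalues w m ! deg_max w = K"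
  shows "(\<forall>x0. HSS w m (2 * Deg_max w m / K) (K / 2) x0) \<and>
         (\<exists>\<kappa>0 > 0. \<forall>x y. w x y / m x \<in> {0, \<kappa>0})"
proof -
  interpret cdg w m K
    by (unfold_locales) (use assms in simp_all)
  have gx: "\<And>x. \<exists>g. G1 x g" using gex_all[OF assms(5)] by blast
  interpret cdg2 w m K
    by unfold_locales (rule gx)
  obtain a b where ab: "w a b \<noteq> 0" using edge_exists[OF assms(5)] by blast
  show ?thesis
  proof
    show "\<forall>x0. HSS w m (2 * Deg_max w m / K) (K / 2) x0" using hss[OF ab] by blast
    show "\<exists>\<kappa>0 > 0. \<forall>x y. w x y / m x \<in> {0, \<kappa>0}"
      using edge_val assms(3) by (intro exI[where x="K / 2"]) auto
  qed
qed


end
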